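(* Let $\Omega$ be a Polish space and $T\in\mathscr{L}(\mathscr{M}(\Omega),\sigma)$ with associated transition kernel $k$. Then the positive part $T^+$ of $T$ taken in the vector lattice $\mathscr{L}(\mathscr{M}(\Omega))$ is weakly continuous, and its associated transition kernel is $k_+$, i.e. $(T^+\mu)(A)=\int_\Omega k_+(x,A)\,d\mu(x)$. In particular, $\mathscr{L}(\mathscr{M}(\Omega),\sigma)$ is a sublattice of $\mathscr{L}(\mathscr{M}(\Omega))$.
   Context: $\mathscr{M}(\Omega)$ is the Banach lattice of finite signed Borel measures; $\mathscr{L}(\mathscr{M}(\Omega))$ is the Banach lattice of bounded operators on it, ordered by $S\le T$ iff $S\mu\le T\mu$ for all positive $\mu$. A transition kernel is a map $k:\Omega\times\mathscr{B}(\Omega)\to\mathbb{R}$, finite signed measure in the second variable and Borel measurable in the first; bounded if $\sup_x\lvert k\rvert(x,\Omega)<\infty$. $T$ is weakly continuous with associated kernel $k$ if $k$ is a bounded transition kernel and $(T\mu)(A)=\int k(x,A)\,d\mu(x)$ for all $\mu,A$; $\mathscr{L}(\mathscr{M}(\Omega),\sigma)$ denotes the space of weakly continuous operators. $k_+(x,\cdot)$ is the positive part of the signed measure $k(x,\cdot)$. *)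

theory Defs
  imports "HOL-Analysis.Analysis"
begin

text \<open>Finite signed Borel measures on a Polish space (the whole type 'a), represented
  as real-valued set functions that are countably additive on the Borel sets.\<close>

definition signed_measure :: "('a::topological_space set \<Rightarrow> real) \<Rightarrow> bool" where
  "signed_measure \<mu> \<longleftrightarrow> \<mu> {} = 0 \<and>
     (\<forall>F::nat \<Rightarrow> 'a set. range F \<subseteq> sets borel \<longrightarrow> disjoint_family F \<longrightarrow>
        (\<lambda>n. \<mu> (F n)) sums \<mu> (\<Union>n. F n))"

definition pos_part :: "('a::topological_space set \<Rightarrow> real) \<Rightarrow> 'a set \<Rightarrow> real" where
  "pos_part \<mu> A = (SUP B\<in>{B\<in>sets borel. B \<subseteq> A}. \<mu> B)"

definition neg_part :: "('a::topological_space set \<Rightarrow> real) \<Rightarrow> 'a set \<Rightarrow> real" where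
  "neg_part \<mu> A = pos_part (\<lambda>B. - \<mu> B) A"

definition tv_norm :: "('a::topological_space set \<Rightarrow> real) \<Rightarrow> real" where
  "tv_norm \<mu> = pos_part \<mu> UNIV + neg_part \<mu> UNIV"

definition pos_meas :: "('a::topological_space set \<Rightarrow> real) \<Rightarrow> 'a measure" where
  "pos_meas \<mu> = measure_of UNIV (sets borel) (\<lambda>A. ennreal (pos_part \<mu> A))"

definition neg_meas :: "('a::topological_space set \<Rightarrow> real) \<Rightarrow> 'a measure" where
  "neg_meas \<mu> = measure_of UNIV (sets borel) (\<lambda>A. ennreal (neg_part \<mu> A))"

definition sintegral :: "('a::topological_space set \<Rightarrow> real) \<Rightarrow> ('a \<Rightarrow> real) \<Rightarrow> real" where
  "sintegral \<mu> f = integral\<^sup>L (pos_meas \<mu>) f - integral\<^sup>L (neg_meas \<mu>) f"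

type_synonym 'a meas_op = "('a set \<Rightarrow> real) \<Rightarrow> ('a set \<Rightarrow> real)"

definition bounded_meas_op :: "'a::topological_space meas_op \<Rightarrow> bool" where
  "bounded_meas_op T \<longleftrightarrow>
     (\<forall>\<mu>. signed_measure \<mu> \<longrightarrow> signed_measure (T \<mu>)) \<and>
     (\<forall>\<mu> \<nu> a b. signed_measure \<mu> \<longrightarrow> signed_measure \<nu> \<longrightarrow>
        (\<forall>A\<in>sets borel. T (\<lambda>B. a * \<mu> B + b * \<nu> B) A = a * T \<mu> A + b * T \<nu> A)) \<and>
     (\<exists>C. \<forall>\<mu>. signed_measure \<mu> \<longrightarrow> tv_norm (T \<mu>) \<le> C * tv_norm \<mu>)"

definition op_le :: "'a::topological_space meas_op \<Rightarrow> 'a meas_op \<Rightarrow> bool" where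
  "op_le S T \<longleftrightarrow> (\<forall>\<mu>. signed_measure \<mu> \<longrightarrow> (\<forall>A\<in>sets borel. 0 \<le> \<mu> A) \<longrightarrow>
       (\<forall>A\<in>sets borel. S \<mu> A \<le> T \<mu> A))"

definition zero_op :: "'a meas_op" where
  "zero_op = (\<lambda>\<mu> A. 0)"

definition is_pos_part_op :: "'a::topological_space meas_op \<Rightarrow> 'a meas_op \<Rightarrow> bool" where
  "is_pos_part_op T P \<longleftrightarrow> bounded_meas_op P \<and> op_le T P \<and> op_le zero_op P \<and>
     (\<forall>S. bounded_meas_op S \<longrightarrow> op_le T S \<longrightarrow> op_le zero_op S \<longrightarrow> op_le P S)"

definition transition_kernel :: "('a::topological_space \<Rightarrow> 'a set \<Rightarrow> real) \<Rightarrow> bool" where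
  "transition_kernel k \<longleftrightarrow> (\<forall>x. signed_measure (k x)) \<and>
     (\<forall>A\<in>sets borel. (\<lambda>x. k x A) \<in> borel_measurable borel)"

definition bounded_transition_kernel :: "('a::topological_space \<Rightarrow> 'a set \<Rightarrow> real) \<Rightarrow> bool" where
  "bounded_transition_kernel k \<longleftrightarrow> transition_kernel k \<and> (\<exists>C. \<forall>x. tv_norm (k x) \<le> C)"

definition weakly_continuous_with_kernel ::
  "'a::topological_space meas_op \<Rightarrow> ('a \<Rightarrow> 'a set \<Rightarrow> real) \<Rightarrow> bool" where
  "weakly_continuous_with_kernel T k \<longleftrightarrow> bounded_transition_kernel k \<and>
     (\<forall>\<mu>. signed_measure \<mu> \<longrightarrow> (\<forall>A\<in>sets borel. T \<mu> A = sintegral \<mu> (\<lambda>x. k x A)))"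

end

theory Submission
  imports Defs
begin

lemma sm_empty: "signed_measure \<mu> \<Longrightarrow> \<mu> {} = 0"
  by (simp add: signed_measure_def)

lemma sm_sums: "signed_measure \<mu> \<Longrightarrow> range F \<subseteq> sets borel \<Longrightarrow> disjoint_family F \<Longrightarrow>
   (\<lambda>n. \<mu> (F n)) sums \<mu> (\<Union>n. F n)"
  by (simp add: signed_measure_def)

lemma sm_add:
  assumes "signed_measure \<mu>" "A \<in> sets borel" "B \<in> sets borel" "A \<inter> B = {}"
  shows "\<mu> (A \<union> B) = \<mu> A + \<mu> B"
proof -
  have "(\<lambda>n. \<mu> (binaryset A B n)) sums \<mu> (\<Union>n. binaryset A B n)"
    apply (rule sm_sums[OF assms(1)])
    using assms by (auto simp: binaryset_def disjoint_family_on_def range_binaryset_eq)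
  moreover have "(\<lambda>n. \<mu> (binaryset A B n)) sums (\<mu> A + \<mu> B)"
    by (rule binaryset_sums) (simp add: sm_empty assms)
  ultimately show ?thesis by (simp add: UN_binaryset_eq sums_unique2)
qed

lemma sm_split:
  assumes "signed_measure \<mu>" "A \<in> sets borel" "B \<in> sets borel"
  shows "\<mu> A = \<mu> (A \<inter> B) + \<mu> (A - B)"
proof -
  have "A = (A \<inter> B) \<union> (A - B)" by auto
  then show ?thesis using sm_add[OF assms(1), of "A \<inter> B" "A - B"] assms by auto
qed

lemma sm_diff:
  assumes "signed_measure \<mu>" "A \<in> sets borel" "B \<in> sets borel" "B \<subseteq> A"
  shows "\<mu> (A - B) = \<mu> A - \<mu> B"
  using sm_split[OF assms(1-3)] assms(4) by (simp add: Int_absorb1)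

lemma sm_finite_union:
  assumes "signed_measure \<mu>" "range G \<subseteq> sets borel" "disjoint_family G"
  shows "\<mu> (\<Union>i<(n::nat). G i) = (\<Sum>i<n. \<mu> (G i))"
proof (induction n)
  case 0 then show ?case using sm_empty[OF assms(1)] by simp
next
  case (Suc n)
  have "(\<Union>i<Suc n. G i) = (\<Union>i<n. G i) \<union> G n" by (auto simp: lessThan_Suc)
  moreover have "(\<Union>i<n. G i) \<inter> G n = {}"
  proof -
    have "G i \<inter> G n = {}" if "i < n" for i using assms(3) that by (simp add: disjoint_family_on_def)
    then show ?thesis by blast
  qed
  moreover have "(\<Union>i<n. G i) \<in> sets borel" using assms(2) by auto
  ultimately show ?case using sm_add[OF assms(1), of "\<Union>i<n. G i" "G n"] assms(2) Suc by auto
qed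

lemma sm_incseq:
  assumes "signed_measure \<mu>" "range F \<subseteq> sets borel" "incseq F"
  shows "(\<lambda>n. \<mu> (F n)) \<longlonglongrightarrow> \<mu> (\<Union>n. F n)"
proof -
  have r: "range (disjointed F) \<subseteq> sets borel"
    using assms(2) by (rule sets.range_disjointed_sets)
  have s: "(\<lambda>n. \<mu> (disjointed F n)) sums \<mu> (\<Union>n. F n)"
    using sm_sums[OF assms(1) r disjoint_family_disjointed] by (simp add: UN_disjointed_eq)
  have eq: "(\<Sum>i<Suc n. \<mu> (disjointed F i)) = \<mu> (F n)" for n
  proof -
    have "(\<Sum>i<Suc n. \<mu> (disjointed F i)) = \<mu> (\<Union>i<Suc n. disjointed F i)"
      using sm_finite_union[OF assms(1) r disjoint_family_disjointed] by simp
    also have "(\<Union>i<Suc n. disjointed F i) = (\<Union>i<Suc n. F i)" using finite_UN_disjointed_eq[of F "Suc n"] by (simp add: atLeast0LessThan)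
    also have "\<dots> = F n" using assms(3) by (auto simp: incseq_def less_Suc_eq_le) blast
    finally show ?thesis .
  qed
  have "(\<lambda>n. \<Sum>i<n. \<mu> (disjointed F i)) \<longlonglongrightarrow> \<mu> (\<Union>n. F n)" using s by (simp add: sums_def)
  then have "(\<lambda>n. \<Sum>i<Suc n. \<mu> (disjointed F i)) \<longlonglongrightarrow> \<mu> (\<Union>n. F n)" by (rule LIMSEQ_Suc)
  then show ?thesis by (simp only: eq)
qed

lemma sm_decseq:
  assumes "signed_measure \<mu>" "range F \<subseteq> sets borel" "decseq F"
  shows "(\<lambda>n. \<mu> (F n)) \<longlonglongrightarrow> \<mu> (\<Inter>n. F n)"
proof -
  have r: "range (\<lambda>n. UNIV - F n) \<subseteq> sets borel" using assms(2) by auto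
  have i: "incseq (\<lambda>n. UNIV - F n)" using assms(3) by (auto simp: incseq_def decseq_def)
  have 1: "(\<lambda>n. \<mu> (UNIV - F n)) \<longlonglongrightarrow> \<mu> (\<Union>n. UNIV - F n)" by (rule sm_incseq[OF assms(1) r i])
  have "(\<Union>n. UNIV - F n) = UNIV - (\<Inter>n. F n)" by auto
  moreover have "(\<Inter>n. F n) \<in> sets borel" using assms(2) by auto
  ultimately have 2: "\<mu> (\<Union>n. UNIV - F n) = \<mu> UNIV - \<mu> (\<Inter>n. F n)"
    using sm_diff[OF assms(1)] by auto
  have 3: "\<mu> (UNIV - F n) = \<mu> UNIV - \<mu> (F n)" for n using sm_diff[OF assms(1)] assms(2) by auto
  have "(\<lambda>n. \<mu> UNIV - \<mu> (UNIV - F n)) \<longlonglongrightarrow> \<mu> UNIV - \<mu> (\<Union>n. UNIV - F n)"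
    using 1 by (intro tendsto_diff tendsto_const)
  then show ?thesis unfolding 2 3 by simp
qed


lemma sm_bounded:
  assumes sm: "signed_measure \<mu>"
  shows "\<exists>K. \<forall>A\<in>sets borel. \<bar>\<mu> A\<bar> \<le> K"
proof (rule ccontr)
  define good where "good E \<longleftrightarrow> (\<exists>K. \<forall>B\<in>sets borel. B \<subseteq> E \<longrightarrow> \<bar>\<mu> B\<bar> \<le> K)" for E :: "'a set"
  assume "\<not> ?thesis"
  then have ngU: "\<not> good UNIV" by (auto simp: good_def)
  have step: "\<exists>B. B \<in> sets borel \<and> B \<subseteq> E \<and> 1 \<le> \<bar>\<mu> B\<bar> \<and> \<not> good (E - B)"
    if E: "E \<in> sets borel" "\<not> good E" for E
  proof -
    from E(2) have "\<forall>K. \<exists>B\<in>sets borel. B \<subseteq> E \<and> \<not> \<bar>\<mu> B\<bar> \<le> K"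
      unfolding good_def by blast
    then obtain B where B: "B \<in> sets borel" "B \<subseteq> E" "\<not> \<bar>\<mu> B\<bar> \<le> \<bar>\<mu> E\<bar> + 1"
      by blast
    have eq: "\<mu> E = \<mu> B + \<mu> (E - B)"
      using sm_split[OF sm E(1) B(1)] B(2) by (simp add: Int_absorb1)
    have 1: "1 \<le> \<bar>\<mu> B\<bar>" "1 \<le> \<bar>\<mu> (E - B)\<bar>" using B(3) eq by linarith+
    show ?thesis
    proof (cases "good (E - B)")
      case False then show ?thesis using B 1 by blast
    next
      case True
      have "\<not> good B"
      proof
        assume "good B"
        then obtain K1 where K1: "\<forall>C\<in>sets borel. C \<subseteq> B \<longrightarrow> \<bar>\<mu> C\<bar> \<le> K1" by (auto simp: good_def)
        from True obtain K2 where K2: "\<forall>C\<in>sets borel. C \<subseteq> E - B \<longrightarrow> \<bar>\<mu> C\<bar> \<le> K2" by (auto simp: good_def)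
        have "\<bar>\<mu> C\<bar> \<le> K1 + K2" if "C \<in> sets borel" "C \<subseteq> E" for C
        proof -
          have "\<mu> C = \<mu> (C \<inter> B) + \<mu> (C - B)" using sm_split[OF sm that(1) B(1)] .
          moreover have "\<bar>\<mu> (C \<inter> B)\<bar> \<le> K1"
            using that B(1) by (intro K1[rule_format]) auto
          moreover have "\<bar>\<mu> (C - B)\<bar> \<le> K2"
            using that B(1) by (intro K2[rule_format]) auto
          ultimately show ?thesis by arith
        qed
        then have "good E" by (auto simp: good_def)
        with E(2) show False by simp
      qed
      moreover have "E - (E - B) = B" using B(2) by auto
      ultimately show ?thesis using 1 E(1) B(1) by (intro exI[of _ "E - B"]) auto
    qed
  qed
  have "\<forall>E. \<exists>B. E \<in> sets borel \<and> \<not> good E \<longrightarrow> B \<in> sets borel \<and> B \<subseteq> E \<and> 1 \<le> \<bar>\<mu> B\<bar> \<and> \<not> good (E - B)"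
    using step by blast
  then have "\<exists>g. \<forall>E. E \<in> sets borel \<and> \<not> good E \<longrightarrow> g E \<in> sets borel \<and> g E \<subseteq> E \<and> 1 \<le> \<bar>\<mu> (g E)\<bar> \<and> \<not> good (E - g E)"
    by (rule choice)
  then obtain g where g0: "\<forall>E. E \<in> sets borel \<and> \<not> good E \<longrightarrow> g E \<in> sets borel \<and> g E \<subseteq> E \<and> 1 \<le> \<bar>\<mu> (g E)\<bar> \<and> \<not> good (E - g E)"
    by blast
  have g: "\<And>E. E \<in> sets borel \<Longrightarrow> \<not> good E \<Longrightarrow>
      g E \<in> sets borel \<and> g E \<subseteq> E \<and> 1 \<le> \<bar>\<mu> (g E)\<bar> \<and> \<not> good (E - g E)"
    using g0 by blast
  define E where "E n = ((\<lambda>X. X - g X) ^^ n) UNIV" for n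
  have ESuc: "E (Suc n) = E n - g (E n)" for n by (simp add: E_def)
  have Einv: "E n \<in> sets borel \<and> \<not> good (E n)" for n
  proof (induction n)
    case 0 then show ?case using ngU by (simp add: E_def)
  next
    case (Suc n) then show ?case using g[of "E n"] by (auto simp: ESuc)
  qed
  define Cs where "Cs n = g (E n)" for n
  have C: "Cs n \<in> sets borel" "Cs n \<subseteq> E n" "1 \<le> \<bar>\<mu> (Cs n)\<bar>" for n
    using g[of "E n"] Einv[of n] by (auto simp: Cs_def)
  have dec: "E n \<subseteq> E m" if "m \<le> n" for m n
    using that
  proof (induction n)
    case 0 then show ?case by simp
  next
    case (Suc n) then show ?case by (auto simp: ESuc le_Suc_eq)
  qed
  have disj: "disjoint_family Cs"
  proof (unfold disjoint_family_on_def, intro ballI impI)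
    fix m n :: nat assume "m \<noteq> n"
    have *: "Cs a \<inter> Cs b = {}" if "a < b" for a b
    proof -
      have "Cs b \<subseteq> E (Suc a)" using C(2)[of b] dec[of "Suc a" b] that by auto
      then show ?thesis by (auto simp: ESuc Cs_def)
    qed
    show "Cs m \<inter> Cs n = {}"
      using \<open>m \<noteq> n\<close> *[of m n] *[of n m] by (cases "m < n") auto
  qed
  have "(\<lambda>n. \<mu> (Cs n)) sums \<mu> (\<Union>n. Cs n)"
    using sm_sums[OF sm _ disj] C(1) by auto
  then have "(\<lambda>n. \<mu> (Cs n)) \<longlonglongrightarrow> 0"
    using summable_LIMSEQ_zero sums_summable by blast
  then have "(\<lambda>n. \<bar>\<mu> (Cs n)\<bar>) \<longlonglongrightarrow> \<bar>0\<bar>" by (rule tendsto_rabs)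
  then have "eventually (\<lambda>n. \<bar>\<mu> (Cs n)\<bar> < 1) sequentially"
    by (rule order_tendstoD(2)) simp
  then obtain n where "\<bar>\<mu> (Cs n)\<bar> < 1" by (auto dest: eventually_happens)
  with C(3)[of n] show False by simp
qed

lemma sm_bdd:
  assumes sm: "signed_measure \<mu>" and X: "X \<subseteq> sets borel"
  shows "bdd_above (\<mu> ` X)" "bdd_below (\<mu> ` X)"
proof -
  obtain K where K: "\<forall>A\<in>sets borel. \<bar>\<mu> A\<bar> \<le> K" using sm_bounded[OF sm] by blast
  show "bdd_above (\<mu> ` X)" unfolding bdd_above_def
    using K X by (intro exI[of _ K]) (auto simp: abs_le_iff)
  show "bdd_below (\<mu> ` X)" unfolding bdd_below_def
    using K X by (intro exI[of _ "-K"]) (force simp: abs_le_iff)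
qed


lemma sm_hahn:
  assumes sm: "signed_measure \<mu>"
  shows "\<exists>Y\<in>sets borel. (\<forall>X\<in>sets borel. X \<subseteq> Y \<longrightarrow> 0 \<le> \<mu> X) \<and> (\<forall>X\<in>sets borel. X \<inter> Y = {} \<longrightarrow> \<mu> X \<le> 0)"
proof -
  define d where "d = \<mu>"
  have bdd[intro]: "bdd_above (d ` sets borel)" using sm_bdd[OF sm, of "sets borel"] by (simp add: d_def)
  define \<gamma> where "\<gamma> = (SUP X\<in>sets borel. d X)"
  have le_\<gamma>[intro]: "X \<in> sets borel \<Longrightarrow> d X \<le> \<gamma>" for X
    by (auto simp: \<gamma>_def intro!: cSUP_upper)
  have "\<exists>X\<in>sets borel. \<gamma> - 1 / 2^n < d X" for n
    unfolding \<gamma>_def by (intro less_cSUP_iff[THEN iffD1]) auto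
  then have "\<exists>f. \<forall>n. f n \<in> sets borel \<and> d (f n) > \<gamma> - 1 / 2^n"
    by metis
  then obtain E where [measurable]: "E n \<in> sets borel" and E: "d (E n) > \<gamma> - 1 / 2^n" for n
    by auto
  define F where "F m n = (if m \<le> n then \<Inter>i\<in>{m..n}. E i else UNIV)" for m n
  have [measurable]: "F m n \<in> sets borel" for m n
    by (auto simp: F_def)
  have dadd: "d (A \<union> B) = d A + d (B - A)" if "A \<in> sets borel" "B \<in> sets borel" for A B
  proof -
    have "A \<union> B = A \<union> (B - A)" by auto
    then show ?thesis using sm_add[OF sm, of A "B - A"] that by (auto simp: d_def)
  qed
  have dsplit: "d A = d (A \<inter> B) + d (A - B)" if "A \<in> sets borel" "B \<in> sets borel" for A B
    using sm_split[OF sm that] by (simp add: d_def)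
  have 1: "\<gamma> - 2 / 2 ^ m + 1 / 2 ^ n \<le> d (F m n)" if "m \<le> n" for m n
    using that
  proof (induct rule: dec_induct)
    case base with E[of m] show ?case
      by (simp add: F_def field_simps)
  next
    case (step i)
    have F_Suc: "F m (Suc i) = F m i \<inter> E (Suc i)"
      using \<open>m \<le> i\<close> by (auto simp: F_def le_Suc_eq)
    have "\<gamma> + (\<gamma> - 2 / 2^m + 1 / 2 ^ Suc i) \<le> (\<gamma> - 1 / 2^Suc i) + (\<gamma> - 2 / 2^m + 1 / 2^i)"
      by (simp add: field_simps)
    also have "\<dots> \<le> d (E (Suc i)) + d (F m i)"
      using E[of "Suc i"] by (intro add_mono step) auto
    also have "\<dots> = d (E (Suc i)) + d (F m i - E (Suc i)) + d (F m (Suc i))"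
      using dsplit[of "F m i" "E (Suc i)"] by (simp add: F_Suc)
    also have "\<dots> = d (E (Suc i) \<union> F m i) + d (F m (Suc i))"
      using dadd[of "E (Suc i)" "F m i"] by simp
    also have "\<dots> \<le> \<gamma> + d (F m (Suc i))"
      by auto
    finally show ?case
      by auto
  qed
  define F' where "F' m = (\<Inter>i\<in>{m..}. E i)" for m
  have F'_eq: "F' m = (\<Inter>i. F m (i + m))" for m
    by (fastforce simp: le_iff_add[of m] F'_def F_def)
  have [measurable]: "F' m \<in> sets borel" for m
    by (auto simp: F'_def)
  have \<gamma>_le: "\<gamma> - 0 \<le> d (\<Union>m. F' m)"
  proof (rule LIMSEQ_le)
    show "(\<lambda>n. \<gamma> - 2 / 2 ^ n) \<longlonglongrightarrow> \<gamma> - 0"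
      by (intro tendsto_intros LIMSEQ_divide_realpow_zero) auto
    have "incseq F'"
      by (auto simp: incseq_def F'_def)
    then show "(\<lambda>m. d (F' m)) \<longlonglongrightarrow> d (\<Union>m. F' m)"
      unfolding d_def by (intro sm_incseq[OF sm]) auto
    have "\<gamma> - 2 / 2 ^ m + 0 \<le> d (F' m)" for m
    proof (rule LIMSEQ_le)
      have *: "decseq (\<lambda>n. F m (n + m))"
        by (auto simp: decseq_def F_def)
      have "(\<lambda>n. d (F m (n + m))) \<longlonglongrightarrow> d (F' m)"
        unfolding d_def F'_eq by (intro sm_decseq[OF sm] *) auto
      then show "(\<lambda>n. d (F m n)) \<longlonglongrightarrow> d (F' m)"
        by (rule LIMSEQ_offset[where k=m])
      show "(\<lambda>n. \<gamma> - 2 / 2 ^ m + 1 / 2 ^ n) \<longlonglongrightarrow> \<gamma> - 2 / 2 ^ m + 0"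
        by (intro tendsto_add LIMSEQ_divide_realpow_zero tendsto_const) auto
      show "\<exists>N. \<forall>n\<ge>N. \<gamma> - 2 / 2 ^ m + 1 / 2 ^ n \<le> d (F m n)"
        using 1[of m] by (intro exI[of _ m]) auto
    qed
    then show "\<exists>N. \<forall>n\<ge>N. \<gamma> - 2 / 2 ^ n \<le> d (F' n)"
      by auto
  qed
  have U[measurable]: "(\<Union>m. F' m) \<in> sets borel" by auto
  show ?thesis
  proof (intro bexI[of _ "\<Union>m. F' m"] conjI ballI impI)
    fix X assume X0: "X \<in> sets borel" and X: "X \<subseteq> (\<Union>m. F' m)"
    have "d (\<Union>m. F' m) = d ((\<Union>m. F' m) \<inter> X) + d ((\<Union>m. F' m) - X)"
      using dsplit[OF U X0] .
    moreover have "(\<Union>m. F' m) \<inter> X = X" using X by auto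
    moreover have "d ((\<Union>m. F' m) - X) \<le> \<gamma>" using X0 by (intro le_\<gamma>) auto
    ultimately show "0 \<le> \<mu> X"
      using \<gamma>_le by (auto simp: d_def)
  next
    fix X assume X0: "X \<in> sets borel" and X: "X \<inter> (\<Union>m. F' m) = {}"
    have "d ((\<Union>m. F' m) \<union> X) = d (\<Union>m. F' m) + d (X - (\<Union>m. F' m))"
      using dadd[OF U X0] .
    moreover have "X - (\<Union>m. F' m) = X" using X by auto
    moreover have "d ((\<Union>m. F' m) \<union> X) \<le> \<gamma>" using X0 by (intro le_\<gamma>) auto
    ultimately show "\<mu> X \<le> 0"
      using \<gamma>_le by (auto simp: d_def)
  qed (rule U)
qed


definition hahn_set :: "('a::topological_space set \<Rightarrow> real) \<Rightarrow> 'a set \<Rightarrow> bool" where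
  "hahn_set \<mu> Y \<longleftrightarrow> Y \<in> sets borel \<and> (\<forall>X\<in>sets borel. X \<subseteq> Y \<longrightarrow> 0 \<le> \<mu> X) \<and>
     (\<forall>X\<in>sets borel. X \<inter> Y = {} \<longrightarrow> \<mu> X \<le> 0)"

lemma hahn_exists: "signed_measure \<mu> \<Longrightarrow> \<exists>Y. hahn_set \<mu> Y"
  using sm_hahn unfolding hahn_set_def by blast

lemma pos_part_hahn:
  assumes sm: "signed_measure \<mu>" and h: "hahn_set \<mu> Y" and A: "A \<in> sets borel"
  shows "pos_part \<mu> A = \<mu> (A \<inter> Y)"
  unfolding pos_part_def
proof (rule cSup_eq_maximum)
  have Y: "Y \<in> sets borel" using h by (simp add: hahn_set_def)
  show "\<mu> (A \<inter> Y) \<in> \<mu> ` {B \<in> sets borel. B \<subseteq> A}" using A Y by auto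
  show "x \<le> \<mu> (A \<inter> Y)" if "x \<in> \<mu> ` {B \<in> sets borel. B \<subseteq> A}" for x
  proof -
    from that obtain B where B: "B \<in> sets borel" "B \<subseteq> A" "x = \<mu> B" by auto
    have "\<mu> B = \<mu> (B \<inter> Y) + \<mu> (B - Y)" using sm_split[OF sm B(1) Y] .
    moreover have "\<mu> (B - Y) \<le> 0" using h B(1) Y by (auto simp: hahn_set_def)
    moreover have "\<mu> (A \<inter> Y) = \<mu> (B \<inter> Y) + \<mu> ((A \<inter> Y) - B)"
    proof -
      have "(A \<inter> Y) \<inter> B = B \<inter> Y" using B(2) by auto
      then show ?thesis using sm_split[OF sm _ B(1), of "A \<inter> Y"] A Y by auto
    qed
    moreover have "0 \<le> \<mu> ((A \<inter> Y) - B)"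
    proof -
      have "(A \<inter> Y) - B \<in> sets borel" "(A \<inter> Y) - B \<subseteq> Y" using A B(1) Y by auto
      then show ?thesis using h by (auto simp: hahn_set_def)
    qed
    ultimately show ?thesis using B(3) by linarith
  qed
qed

lemma neg_part_hahn:
  assumes sm: "signed_measure \<mu>" and h: "hahn_set \<mu> Y" and A: "A \<in> sets borel"
  shows "neg_part \<mu> A = - \<mu> (A - Y)"
  unfolding neg_part_def pos_part_def
proof (rule cSup_eq_maximum)
  have Y: "Y \<in> sets borel" using h by (simp add: hahn_set_def)
  show "- \<mu> (A - Y) \<in> (\<lambda>B. - \<mu> B) ` {B \<in> sets borel. B \<subseteq> A}" using A Y by auto
  show "x \<le> - \<mu> (A - Y)" if "x \<in> (\<lambda>B. - \<mu> B) ` {B \<in> sets borel. B \<subseteq> A}" for x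
  proof -
    from that obtain B where B: "B \<in> sets borel" "B \<subseteq> A" "x = - \<mu> B" by auto
    have "\<mu> B = \<mu> (B \<inter> Y) + \<mu> (B - Y)" using sm_split[OF sm B(1) Y] .
    moreover have "0 \<le> \<mu> (B \<inter> Y)" using h B(1) Y by (auto simp: hahn_set_def)
    moreover have "\<mu> (A - Y) = \<mu> (B - Y) + \<mu> ((A - Y) - B)"
    proof -
      have "(A - Y) \<inter> B = B - Y" using B(2) by auto
      then show ?thesis using sm_split[OF sm _ B(1), of "A - Y"] A Y by auto
    qed
    moreover have "\<mu> ((A - Y) - B) \<le> 0"
    proof -
      have "(A - Y) - B \<in> sets borel" "((A - Y) - B) \<inter> Y = {}" using A B(1) Y by auto
      then show ?thesis using h by (auto simp: hahn_set_def)
    qed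
    ultimately show ?thesis using B(3) by linarith
  qed
qed

lemma hahn_UNIV: "(\<forall>A\<in>sets borel. 0 \<le> \<mu> A) \<Longrightarrow> signed_measure \<mu> \<Longrightarrow> hahn_set \<mu> UNIV"
  unfolding hahn_set_def by (simp add: sm_empty)

lemma sm_restrict:
  assumes sm: "signed_measure \<mu>" and Y: "Y \<in> sets borel"
  shows "signed_measure (\<lambda>A. \<mu> (A \<inter> Y))" "signed_measure (\<lambda>A. \<mu> (A - Y))"
proof -
  show "signed_measure (\<lambda>A. \<mu> (A \<inter> Y))"
    unfolding signed_measure_def
  proof (intro conjI allI impI)
    show "\<mu> ({} \<inter> Y) = 0" using sm_empty[OF sm] by simp
    fix F :: "nat \<Rightarrow> 'a set" assume F: "range F \<subseteq> sets borel" "disjoint_family F"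
    have "(\<lambda>n. \<mu> (F n \<inter> Y)) sums \<mu> (\<Union>n. F n \<inter> Y)"
      apply (rule sm_sums[OF sm])
      using F Y by (auto simp: disjoint_family_on_def)
    moreover have "(\<Union>n. F n \<inter> Y) = (\<Union>n. F n) \<inter> Y" by auto
    ultimately show "(\<lambda>n. \<mu> (F n \<inter> Y)) sums \<mu> ((\<Union>n. F n) \<inter> Y)" by simp
  qed
  show "signed_measure (\<lambda>A. \<mu> (A - Y))"
    unfolding signed_measure_def
  proof (intro conjI allI impI)
    show "\<mu> ({} - Y) = 0" using sm_empty[OF sm] by simp
    fix F :: "nat \<Rightarrow> 'a set" assume F: "range F \<subseteq> sets borel" "disjoint_family F"
    have "(\<lambda>n. \<mu> (F n - Y)) sums \<mu> (\<Union>n. F n - Y)"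
      apply (rule sm_sums[OF sm])
      using F Y by (auto simp: disjoint_family_on_def)
    moreover have "(\<Union>n. F n - Y) = (\<Union>n. F n) - Y" by auto
    ultimately show "(\<lambda>n. \<mu> (F n - Y)) sums \<mu> ((\<Union>n. F n) - Y)" by simp
  qed
qed

lemma sm_lin:
  assumes "signed_measure \<mu>" "signed_measure \<nu>"
  shows "signed_measure (\<lambda>B. a * \<mu> B + b * \<nu> B)"
  unfolding signed_measure_def
proof (intro conjI allI impI)
  show "a * \<mu> {} + b * \<nu> {} = 0" using assms by (simp add: sm_empty)
  fix F :: "nat \<Rightarrow> 'a set" assume F: "range F \<subseteq> sets borel" "disjoint_family F"
  show "(\<lambda>n. a * \<mu> (F n) + b * \<nu> (F n)) sums (a * \<mu> (\<Union>n. F n) + b * \<nu> (\<Union>n. F n))"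
    by (intro sums_add sums_mult sm_sums[OF assms(1) F] sm_sums[OF assms(2) F])
qed

lemma emeasure_mof:
  assumes sm: "signed_measure \<nu>" and pos: "\<forall>A\<in>sets borel. 0 \<le> \<nu> A"
    and g: "\<forall>A\<in>sets borel. g A = \<nu> A" and A: "A \<in> sets borel"
  shows "emeasure (measure_of UNIV (sets borel) (\<lambda>A. ennreal (g A))) A = ennreal (\<nu> A)"
proof -
  have "emeasure (measure_of UNIV (sets borel) (\<lambda>A. ennreal (g A))) A = ennreal (g A)"
  proof (rule emeasure_measure_of_sigma)
    show "sigma_algebra UNIV (sets borel)" using sets.sigma_algebra_axioms[of borel] by simp
    show "positive (sets borel) (\<lambda>A. ennreal (g A))" using g sm_empty[OF sm] by (simp add: positive_def)
    show "countably_additive (sets borel) (\<lambda>A. ennreal (g A))"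
    proof (rule countably_additiveI)
      fix F :: "nat \<Rightarrow> 'a set" assume F: "range F \<subseteq> sets borel" "disjoint_family F" "(\<Union>i. F i) \<in> sets borel"
      have s: "(\<lambda>n. \<nu> (F n)) sums \<nu> (\<Union>n. F n)" using sm_sums[OF sm F(1,2)] .
      have "(\<Sum>i. ennreal (g (F i))) = (\<Sum>i. ennreal (\<nu> (F i)))" using g F(1) by auto
      also have "\<dots> = ennreal (\<Sum>i. \<nu> (F i))"
        using pos F(1) s by (intro suminf_ennreal2) (auto simp: sums_summable)
      also have "\<dots> = ennreal (g (\<Union>i. F i))" using s g F(3) by (simp add: sums_unique[symmetric])
      finally show "(\<Sum>i. ennreal (g (F i))) = ennreal (g (\<Union>i. F i))" .
    qed
    show "A \<in> sets borel" by fact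
  qed
  then show ?thesis using g A by simp
qed

lemma sets_mof[simp]: "sets (measure_of UNIV (sets borel) f) = (sets borel :: 'a::topological_space set set)"
  using sets.sets_measure_of_eq[of "borel :: 'a measure" f] by simp

lemma space_mof[simp]: "space (measure_of UNIV (sets borel) f) = (UNIV :: 'a::topological_space set)"
  using sets.space_measure_of_eq[of "borel :: 'a measure" f] by simp

lemma jordan:
  assumes sm: "signed_measure \<mu>"
  shows "finite_measure (pos_meas \<mu>)" "finite_measure (neg_meas \<mu>)"
    "sets (pos_meas \<mu>) = sets borel" "sets (neg_meas \<mu>) = sets borel"
    "space (pos_meas \<mu>) = UNIV" "space (neg_meas \<mu>) = UNIV"
    "A \<in> sets borel \<Longrightarrow> measure (pos_meas \<mu>) A = pos_part \<mu> A"
    "A \<in> sets borel \<Longrightarrow> measure (neg_meas \<mu>) A = neg_part \<mu> A"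
    "A \<in> sets borel \<Longrightarrow> emeasure (pos_meas \<mu>) A = ennreal (pos_part \<mu> A)"
    "A \<in> sets borel \<Longrightarrow> emeasure (neg_meas \<mu>) A = ennreal (neg_part \<mu> A)"
    "A \<in> sets borel \<Longrightarrow> \<mu> A = pos_part \<mu> A - neg_part \<mu> A"
    "A \<in> sets borel \<Longrightarrow> 0 \<le> pos_part \<mu> A"
    "A \<in> sets borel \<Longrightarrow> 0 \<le> neg_part \<mu> A"
    "signed_measure (pos_part \<mu>)" "signed_measure (neg_part \<mu>)"
proof -
  obtain Y where h: "hahn_set \<mu> Y" using hahn_exists[OF sm] by blast
  have Y: "Y \<in> sets borel" using h by (simp add: hahn_set_def)
  have pp: "pos_part \<mu> A = \<mu> (A \<inter> Y)" if "A \<in> sets borel" for A using pos_part_hahn[OF sm h that] .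
  have np: "neg_part \<mu> A = - \<mu> (A - Y)" if "A \<in> sets borel" for A using neg_part_hahn[OF sm h that] .
  have p0: "0 \<le> \<mu> (A \<inter> Y)" if "A \<in> sets borel" for A
  proof -
    have "A \<inter> Y \<in> sets borel" "A \<inter> Y \<subseteq> Y" using that Y by auto
    then show ?thesis using h unfolding hahn_set_def by blast
  qed
  have n0: "0 \<le> - \<mu> (A - Y)" if "A \<in> sets borel" for A
  proof -
    have "A - Y \<in> sets borel" "(A - Y) \<inter> Y = {}" using that Y by auto
    then have "\<mu> (A - Y) \<le> 0" using h unfolding hahn_set_def by blast
    then show ?thesis by simp
  qed
  have smp: "signed_measure (\<lambda>A. \<mu> (A \<inter> Y))" using sm_restrict[OF sm Y] by simp
  have smn: "signed_measure (\<lambda>A. - \<mu> (A - Y))"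
    using sm_lin[OF sm_restrict(2)[OF sm Y] sm_restrict(2)[OF sm Y], of "-1" 0] by simp
  have ep: "emeasure (pos_meas \<mu>) A = ennreal (\<mu> (A \<inter> Y))" if "A \<in> sets borel" for A
    unfolding pos_meas_def by (rule emeasure_mof[OF smp _ _ that]) (simp_all add: pp p0)
  have en: "emeasure (neg_meas \<mu>) A = ennreal (- \<mu> (A - Y))" if "A \<in> sets borel" for A
    unfolding neg_meas_def by (rule emeasure_mof[OF smn _ _ that]) (use np n0 in force)+
  show sp: "sets (pos_meas \<mu>) = sets borel" "sets (neg_meas \<mu>) = sets borel"
    "space (pos_meas \<mu>) = UNIV" "space (neg_meas \<mu>) = UNIV"
    by (simp_all add: pos_meas_def neg_meas_def)
  show "finite_measure (pos_meas \<mu>)" "finite_measure (neg_meas \<mu>)"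
    using ep[of UNIV] en[of UNIV] sp by (auto intro!: finite_measureI)
  show "emeasure (pos_meas \<mu>) A = ennreal (pos_part \<mu> A)" if "A \<in> sets borel" for A
    using ep[OF that] pp[OF that] by simp
  show "emeasure (neg_meas \<mu>) A = ennreal (neg_part \<mu> A)" if "A \<in> sets borel" for A
    using en[OF that] np[OF that] by simp
  show "measure (pos_meas \<mu>) A = pos_part \<mu> A" if "A \<in> sets borel" for A
    using ep[OF that] pp[OF that] p0[OF that] by (simp add: measure_def)
  show "measure (neg_meas \<mu>) A = neg_part \<mu> A" if "A \<in> sets borel" for A
    using en[OF that] np[OF that] n0[OF that] by (simp add: measure_def)
  show "\<mu> A = pos_part \<mu> A - neg_part \<mu> A" if "A \<in> sets borel" for A
    using pp[OF that] np[OF that] sm_split[OF sm that Y] by simp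
  show "0 \<le> pos_part \<mu> A" if "A \<in> sets borel" for A using pp[OF that] p0[OF that] by simp
  show "0 \<le> neg_part \<mu> A" if "A \<in> sets borel" for A using np[OF that] n0[OF that] by simp
  have cong: "signed_measure g" if "signed_measure f" "\<forall>A\<in>sets borel. g A = f A" for f g :: "'a set \<Rightarrow> real"
  proof -
    have "g {} = 0" using that unfolding signed_measure_def by simp
    moreover have "(\<lambda>n. g (F n)) sums g (\<Union>n. F n)" if F: "range F \<subseteq> sets borel" "disjoint_family F" for F
    proof -
      have "(\<lambda>n. f (F n)) sums f (\<Union>n. F n)" using sm_sums[OF \<open>signed_measure f\<close> F] .
      moreover have "(\<Union>n. F n) \<in> sets borel" using F by auto
      moreover have "\<And>n. F n \<in> sets borel" using F by auto
      ultimately show ?thesis using \<open>\<forall>A\<in>sets borel. g A = f A\<close> by simp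
    qed
    ultimately show ?thesis unfolding signed_measure_def by blast
  qed
  show "signed_measure (pos_part \<mu>)" by (rule cong[OF smp]) (simp add: pp)
  show "signed_measure (neg_part \<mu>)" by (rule cong[OF smn]) (simp add: np)
qed


lemma fm_int:
  assumes "finite_measure M" "sets M = sets borel" "f \<in> borel_measurable borel" "\<forall>x. \<bar>f x\<bar> \<le> K"
  shows "integrable M (f :: _ \<Rightarrow> real)"
proof -
  have "f \<in> borel_measurable M" using assms(3) measurable_cong_sets[OF assms(2) refl, of borel] by blast
  moreover have "AE x in M. norm (f x) \<le> K" using assms(4) by simp
  ultimately show ?thesis
    using finite_measure.integrable_const_bound[OF assms(1), where B=K and f=f] by blast
qed

lemma space_borelM: "sets M = sets borel \<Longrightarrow> space M = UNIV"
  using sets_eq_imp_space_eq[of M borel] by simp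

lemma LL_nonneg:
  fixes Ms :: "nat \<Rightarrow> 'a::topological_space measure" and c :: "nat \<Rightarrow> real"
  assumes fin: "\<And>i. i < n \<Longrightarrow> finite_measure (Ms i) \<and> sets (Ms i) = sets borel"
    and zero: "\<And>A. A \<in> sets borel \<Longrightarrow> (\<Sum>i<n. c i * measure (Ms i) A) = 0"
    and u: "u \<in> borel_measurable borel" "\<And>x. 0 \<le> u x" "\<And>x. u x \<le> K"
  shows "(\<Sum>i<n. c i * integral\<^sup>L (Ms i) u) = 0"
proof -
  have "(\<exists>K. \<forall>x. u x \<le> K) \<longrightarrow> (\<Sum>i<n. c i * integral\<^sup>L (Ms i) u) = 0"
    using u(1,2)
  proof (induction rule: borel_measurable_induct_real)
    case (set A)
    have "(\<Sum>i<n. c i * integral\<^sup>L (Ms i) (indicator A)) = (\<Sum>i<n. c i * measure (Ms i) A)"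
    proof (intro sum.cong refl)
      fix i assume "i \<in> {..<n}"
      then have "sets (Ms i) = sets borel" using fin by auto
      then have "space (Ms i) = UNIV" by (rule space_borelM)
      then show "c i * integral\<^sup>L (Ms i) (indicator A) = c i * measure (Ms i) A" by simp
    qed
    then show ?case using zero set by simp
  next
    case (mult u a)
    have "(\<Sum>i<n. c i * integral\<^sup>L (Ms i) (\<lambda>x. a * u x)) = a * (\<Sum>i<n. c i * integral\<^sup>L (Ms i) u)"
      by (simp add: sum_distrib_left mult.left_commute)
    moreover have "(\<Sum>i<n. c i * integral\<^sup>L (Ms i) u) = 0" if "\<exists>K. \<forall>x. a * u x \<le> K" "a \<noteq> 0"
    proof -
      from that obtain K where K: "\<forall>x. a * u x \<le> K" by blast
      have "u x \<le> K / a" for x using K[rule_format, of x] mult(1) that(2) by (simp add: field_simps)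
      then show ?thesis using mult(4) by blast
    qed
    ultimately show ?case by auto
  next
    case (add u v)
    show ?case
    proof
      assume "\<exists>K. \<forall>x. v x + u x \<le> K"
      then obtain K where K: "\<forall>x. v x + u x \<le> K" by blast
      have unn: "\<And>x. 0 \<le> u x" by fact
      have um: "u \<in> borel_measurable borel" by fact
      have vm: "v \<in> borel_measurable borel" by fact
      have Pu: "(\<exists>K. \<forall>x. u x \<le> K) \<longrightarrow> (\<Sum>i<n. c i * integral\<^sup>L (Ms i) u) = 0" by fact
      have Pv: "(\<exists>K. \<forall>x. v x \<le> K) \<longrightarrow> (\<Sum>i<n. c i * integral\<^sup>L (Ms i) v) = 0" by fact
      have vnn: "\<And>x. 0 \<le> v x" by fact
      have bu: "\<forall>x. \<bar>u x\<bar> \<le> K" "\<forall>x. \<bar>v x\<bar> \<le> K"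
      proof -
        show "\<forall>x. \<bar>u x\<bar> \<le> K"
        proof fix x show "\<bar>u x\<bar> \<le> K" using K[rule_format, of x] unn[of x] vnn[of x] by linarith qed
        show "\<forall>x. \<bar>v x\<bar> \<le> K"
        proof fix x show "\<bar>v x\<bar> \<le> K" using K[rule_format, of x] unn[of x] vnn[of x] by linarith qed
      qed
      have "(\<Sum>i<n. c i * integral\<^sup>L (Ms i) (\<lambda>x. v x + u x)) =
          (\<Sum>i<n. c i * integral\<^sup>L (Ms i) v) + (\<Sum>i<n. c i * integral\<^sup>L (Ms i) u)"
        unfolding sum.distrib[symmetric]
      proof (intro sum.cong refl)
        fix i assume "i \<in> {..<n}"
        then have f: "finite_measure (Ms i)" "sets (Ms i) = sets borel" using fin by auto
        show "c i * integral\<^sup>L (Ms i) (\<lambda>x. v x + u x) = c i * integral\<^sup>L (Ms i) v + c i * integral\<^sup>L (Ms i) u"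
          unfolding Bochner_Integration.integral_add[OF fm_int[OF f vm bu(2)] fm_int[OF f um bu(1)]]
          by (simp add: distrib_left)
      qed
      moreover have "(\<Sum>i<n. c i * integral\<^sup>L (Ms i) u) = 0"
      proof -
        have "\<forall>x. u x \<le> K" using K vnn by (smt (verit))
        then show ?thesis using Pu by blast
      qed
      moreover have "(\<Sum>i<n. c i * integral\<^sup>L (Ms i) v) = 0"
      proof -
        have "\<forall>x. v x \<le> K" using K unn by (smt (verit))
        then show ?thesis using Pv by blast
      qed
      ultimately show "(\<Sum>i<n. c i * integral\<^sup>L (Ms i) (\<lambda>x. v x + u x)) = 0" by simp
    qed
  next
    case (seq U)
    show ?case
    proof
      assume "\<exists>K. \<forall>x. u x \<le> K"
      then obtain K where K: "\<forall>x. u x \<le> K" by blast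
      have inc: "incseq U" by fact
      have lim: "\<And>x. x \<in> space borel \<Longrightarrow> (\<lambda>i. U i x) \<longlonglongrightarrow> u x" by fact
      have Unn: "\<And>i x. 0 \<le> U i x" by fact
      have Um: "\<And>i. U i \<in> borel_measurable borel" by fact
      have PU: "\<And>i. (\<exists>K. \<forall>x. U i x \<le> K) \<longrightarrow> (\<Sum>j<n. c j * integral\<^sup>L (Ms j) (U i)) = 0" by fact
      have le: "U i x \<le> u x" for i x
      proof -
        have "incseq (\<lambda>i. U i x)" using inc unfolding incseq_def le_fun_def by blast
        then show ?thesis using lim[of x] by (intro incseq_le) auto
      qed
      have b: "\<forall>x. \<bar>U i x\<bar> \<le> K" for i
      proof fix x show "\<bar>U i x\<bar> \<le> K" using le[of i x] K[rule_format, of x] Unn[of i x] by (simp add: abs_of_nonneg) qed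
      have z: "(\<Sum>j<n. c j * integral\<^sup>L (Ms j) (U i)) = 0" for i
      proof -
        have "\<forall>x. U i x \<le> K" using le K by (meson order_trans)
        then show ?thesis using PU[of i] by blast
      qed
      have "(\<lambda>i. \<Sum>j<n. c j * integral\<^sup>L (Ms j) (U i)) \<longlonglongrightarrow> (\<Sum>j<n. c j * integral\<^sup>L (Ms j) u)"
      proof (intro tendsto_sum tendsto_mult tendsto_const)
        fix j assume "j \<in> {..<n}"
        then have f: "finite_measure (Ms j)" "sets (Ms j) = sets borel" using fin by auto
        have m: "g \<in> borel_measurable (Ms j)" if "g \<in> borel_measurable borel" for g :: "_ \<Rightarrow> real"
          using that measurable_cong_sets[OF f(2) refl, of borel] by blast
        show "(\<lambda>i. integral\<^sup>L (Ms j) (U i)) \<longlonglongrightarrow> integral\<^sup>L (Ms j) u"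
        proof (rule integral_dominated_convergence[where w="\<lambda>x. K"])
          show "u \<in> borel_measurable (Ms j)" using m[OF \<open>u \<in> borel_measurable borel\<close>] .
          show "U i \<in> borel_measurable (Ms j)" for i using m[OF Um] .
          show "integrable (Ms j) (\<lambda>x. K)" using f(1) by (simp add: finite_measure.integrable_const)
          show "AE x in Ms j. (\<lambda>i. U i x) \<longlonglongrightarrow> u x" using lim by simp
          show "AE x in Ms j. norm (U i x) \<le> K" for i using b by simp
        qed
      qed
      then show "(\<Sum>j<n. c j * integral\<^sup>L (Ms j) u) = 0" using z by (simp add: LIMSEQ_const_iff)
    qed
  qed
  then show ?thesis using u(3) by blast
qed

lemma LL:
  fixes Ms :: "nat \<Rightarrow> 'a::topological_space measure" and c :: "nat \<Rightarrow> real"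
  assumes fin: "\<And>i. i < n \<Longrightarrow> finite_measure (Ms i) \<and> sets (Ms i) = sets borel"
    and zero: "\<And>A. A \<in> sets borel \<Longrightarrow> (\<Sum>i<n. c i * measure (Ms i) A) = 0"
    and f: "f \<in> borel_measurable borel" "\<And>x. \<bar>f x\<bar> \<le> K"
  shows "(\<Sum>i<n. c i * integral\<^sup>L (Ms i) f) = 0"
proof -
  define fp where "fp x = max (f x) 0" for x
  define fn where "fn x = max (- f x) 0" for x
  have mp: "fp \<in> borel_measurable borel" "fn \<in> borel_measurable borel"
    unfolding fp_def fn_def using f(1) by auto
  have bp: "\<forall>x. \<bar>fp x\<bar> \<le> K" "\<forall>x. \<bar>fn x\<bar> \<le> K"
  proof -
    show "\<forall>x. \<bar>fp x\<bar> \<le> K" unfolding fp_def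
    proof
      fix x show "\<bar>max (f x) 0\<bar> \<le> K" using f(2)[of x] by (auto simp: max_def abs_le_iff)
    qed
    show "\<forall>x. \<bar>fn x\<bar> \<le> K" unfolding fn_def
    proof
      fix x show "\<bar>max (- f x) 0\<bar> \<le> K" using f(2)[of x] by (auto simp: max_def abs_le_iff)
    qed
  qed
  have 1: "(\<Sum>i<n. c i * integral\<^sup>L (Ms i) fp) = 0"
    by (rule LL_nonneg[OF fin zero mp(1), of K]) (use bp in \<open>auto simp: fp_def\<close>)
  have 2: "(\<Sum>i<n. c i * integral\<^sup>L (Ms i) fn) = 0"
    by (rule LL_nonneg[OF fin zero mp(2), of K]) (use bp in \<open>auto simp: fn_def\<close>)
  have "f = (\<lambda>x. fp x - fn x)" by (auto simp: fp_def fn_def)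
  then have "(\<Sum>i<n. c i * integral\<^sup>L (Ms i) f) =
     (\<Sum>i<n. c i * integral\<^sup>L (Ms i) fp) - (\<Sum>i<n. c i * integral\<^sup>L (Ms i) fn)"
    unfolding sum_subtractf[symmetric]
  proof (intro sum.cong refl)
    fix i assume "i \<in> {..<n}"
    then have fi: "finite_measure (Ms i)" "sets (Ms i) = sets borel" using fin by auto
    assume eq: "f = (\<lambda>x. fp x - fn x)"
    show "c i * integral\<^sup>L (Ms i) f = c i * integral\<^sup>L (Ms i) fp - c i * integral\<^sup>L (Ms i) fn"
      unfolding eq Bochner_Integration.integral_diff[OF fm_int[OF fi mp(1) bp(1)] fm_int[OF fi mp(2) bp(2)]]
      by (simp add: right_diff_distrib)
  qed
  then show ?thesis using 1 2 by simp
qed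


lemma sint_decomp:
  assumes sm: "signed_measure \<mu>"
    and M1: "finite_measure M1" "sets M1 = sets borel"
    and M2: "finite_measure M2" "sets M2 = sets borel"
    and eq: "\<And>A. A \<in> sets borel \<Longrightarrow> \<mu> A = measure M1 A - measure M2 A"
    and f: "f \<in> borel_measurable borel" "\<And>x. \<bar>f x\<bar> \<le> K"
  shows "sintegral \<mu> f = integral\<^sup>L M1 f - integral\<^sup>L M2 f"
proof -
  define Ms where "Ms i = [pos_meas \<mu>, neg_meas \<mu>, M1, M2] ! i" for i
  define c :: "nat \<Rightarrow> real" where "c i = [1, -1, -1, 1] ! i" for i
  have s4: "(\<Sum>i<4. g i) = g 0 + g 1 + g 2 + g (3::nat)" for g :: "nat \<Rightarrow> real"
    by (simp add: eval_nat_numeral)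
  have "(\<Sum>i<4. c i * integral\<^sup>L (Ms i) f) = 0"
  proof (rule LL[OF _ _ f])
    fix i :: nat assume "i < 4"
    then have "i = 0 \<or> i = 1 \<or> i = 2 \<or> i = 3" by auto
    then show "finite_measure (Ms i) \<and> sets (Ms i) = sets borel"
      using jordan[OF sm] M1 M2 by (auto simp: Ms_def)
  next
    fix A :: "'a set" assume A: "A \<in> sets borel"
    show "(\<Sum>i<4. c i * measure (Ms i) A) = 0"
      unfolding s4 using jordan(7,8,11)[OF sm A] eq[OF A] by (simp add: Ms_def c_def)
  qed
  then show ?thesis unfolding s4 by (simp add: Ms_def c_def sintegral_def)
qed

lemma sint_lin:
  assumes sm: "signed_measure \<mu>" "signed_measure \<nu>"
    and f: "f \<in> borel_measurable borel" "\<And>x. \<bar>f x\<bar> \<le> K"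
  shows "sintegral (\<lambda>B. a * \<mu> B + b * \<nu> B) f = a * sintegral \<mu> f + b * sintegral \<nu> f"
proof -
  define lam where "lam = (\<lambda>B. a * \<mu> B + b * \<nu> B)"
  have sl: "signed_measure lam" unfolding lam_def by (rule sm_lin[OF sm])
  define Ms where "Ms i = [pos_meas lam, neg_meas lam, pos_meas \<mu>, neg_meas \<mu>, pos_meas \<nu>, neg_meas \<nu>] ! i" for i
  define c :: "nat \<Rightarrow> real" where "c i = [1, -1, -a, a, -b, b] ! i" for i
  have s6: "(\<Sum>i<6. g i) = g 0 + g 1 + g 2 + g 3 + g 4 + g (5::nat)" for g :: "nat \<Rightarrow> real"
    by (simp add: eval_nat_numeral)
  have "(\<Sum>i<6. c i * integral\<^sup>L (Ms i) f) = 0"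
  proof (rule LL[OF _ _ f])
    fix i :: nat assume "i < 6"
    then have "i = 0 \<or> i = 1 \<or> i = 2 \<or> i = 3 \<or> i = 4 \<or> i = 5" by auto
    then show "finite_measure (Ms i) \<and> sets (Ms i) = sets borel"
      using jordan[OF sm(1)] jordan[OF sm(2)] jordan[OF sl] by (auto simp: Ms_def)
  next
    fix A :: "'a set" assume A: "A \<in> sets borel"
    have "lam A = a * \<mu> A + b * \<nu> A" by (simp add: lam_def)
    then show "(\<Sum>i<6. c i * measure (Ms i) A) = 0"
      unfolding s6 using jordan(7,8,11)[OF sm(1) A] jordan(7,8,11)[OF sm(2) A] jordan(7,8,11)[OF sl A]
      by (simp add: Ms_def c_def algebra_simps)
  qed
  then show ?thesis unfolding s6 lam_def[symmetric] by (simp add: Ms_def c_def sintegral_def algebra_simps)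
qed

lemma pos_part_pos:
  assumes sm: "signed_measure \<nu>" and pos: "\<forall>A\<in>sets borel. 0 \<le> \<nu> A" and A: "A \<in> sets borel"
  shows "pos_part \<nu> A = \<nu> A" "neg_part \<nu> A = 0"
  using pos_part_hahn[OF sm hahn_UNIV[OF pos sm] A] neg_part_hahn[OF sm hahn_UNIV[OF pos sm] A]
    sm_empty[OF sm] by simp_all

lemma sint_pos:
  assumes sm: "signed_measure \<nu>" and pos: "\<forall>A\<in>sets borel. 0 \<le> \<nu> A"
    and f: "f \<in> borel_measurable borel" "\<And>x. \<bar>f x\<bar> \<le> K"
  shows "sintegral \<nu> f = integral\<^sup>L (pos_meas \<nu>) f"
proof -
  have "UNIV \<in> null_sets (neg_meas \<nu>)"
    using jordan(4)[OF sm] jordan(10)[OF sm, of UNIV] pos_part_pos(2)[OF sm pos, of UNIV] by (simp add: null_sets_def)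
  then have "AE x in neg_meas \<nu>. f x = 0" by (intro AE_I'[of UNIV]) auto
  then have "integral\<^sup>L (neg_meas \<nu>) f = 0" by (rule integral_eq_zero_AE)
  then show ?thesis by (simp add: sintegral_def)
qed

lemma measure_pos_meas_pos:
  assumes sm: "signed_measure \<nu>" and pos: "\<forall>A\<in>sets borel. 0 \<le> \<nu> A" and A: "A \<in> sets borel"
  shows "measure (pos_meas \<nu>) A = \<nu> A"
  using jordan(7)[OF sm A] pos_part_pos(1)[OF sm pos A] by simp


datatype atm = AAt nat | ACo atm | AUn atm atm

instance atm :: countable by countable_datatype

primrec ev :: "(nat \<Rightarrow> 'a set) \<Rightarrow> atm \<Rightarrow> 'a set" where
  "ev G (AAt n) = G n"
| "ev G (ACo t) = - ev G t"
| "ev G (AUn s t) = ev G s \<union> ev G t"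

lemma ev_borel: "(\<And>n. G n \<in> sets borel) \<Longrightarrow> ev G t \<in> sets borel"
  by (induction t) auto

definition sd :: "'a set \<Rightarrow> 'a set \<Rightarrow> 'a set" where "sd X Y = (X - Y) \<union> (Y - X)"

definition emp :: atm where "emp = ACo (AUn (AAt 0) (ACo (AAt 0)))"

lemma ev_emp[simp]: "ev G emp = {}" by (auto simp: emp_def)

primrec uns :: "(nat \<Rightarrow> atm) \<Rightarrow> nat \<Rightarrow> atm" where
  "uns t 0 = emp"
| "uns t (Suc n) = AUn (uns t n) (t n)"

lemma ev_uns: "ev G (uns t n) = (\<Union>i<n. ev G (t i))"
  by (induction n) (auto simp: lessThan_Suc)

lemma approx_alg:
  fixes M :: "'a::topological_space measure"
  assumes M: "finite_measure M" "sets M = sets borel"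
    and G: "\<And>n. G n \<in> sets borel"
    and E: "E \<in> sigma_sets UNIV (range G)"
  shows "\<forall>\<epsilon>>0. \<exists>t. measure M (sd E (ev G t)) < \<epsilon>"
  using E
proof (induction rule: sigma_sets.induct)
  interpret finite_measure M by fact
  have sub: "sigma_sets UNIV (range G) \<subseteq> sets borel"
    using sets.sigma_sets_subset[of "range G" borel] G by auto
  have evb: "ev G t \<in> sets M" for t using ev_borel[OF G] M(2) by simp
  {
    case (Basic a)
    then obtain n where "a = G n" by auto
    then show ?case by (intro allI impI exI[of _ "AAt n"]) (simp add: sd_def)
  next
    case Empty
    show ?case by (intro allI impI exI[of _ emp]) (simp add: sd_def)
  next
    case (Compl a)
    show ?case
    proof (intro allI impI)
      fix \<epsilon> :: real assume "\<epsilon> > 0"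
      then obtain t where t: "measure M (sd a (ev G t)) < \<epsilon>" using Compl.IH by blast
      have "sd (UNIV - a) (ev G (ACo t)) = sd a (ev G t)" by (auto simp: sd_def)
      then show "\<exists>t. measure M (sd (UNIV - a) (ev G t)) < \<epsilon>" using t by metis
    qed
  next
    case (Union F)
    show ?case
    proof (intro allI impI)
      fix \<epsilon> :: real assume e: "\<epsilon> > 0"
      have Fb: "F i \<in> sets M" for i using Union.hyps sub M(2) by auto
      define P where "P n = (\<Union>i<n. F i)" for n
      have Pb: "P n \<in> sets M" for n using Fb by (auto simp: P_def)
      have UF: "(\<Union>i. F i) \<in> sets M" using Fb by auto
      have "incseq P" unfolding P_def incseq_def by (auto intro: less_le_trans)
      moreover have "(\<Union>n. P n) = (\<Union>i. F i)" by (auto simp: P_def)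
      ultimately have "(\<lambda>n. measure M (P n)) \<longlonglongrightarrow> measure M (\<Union>i. F i)"
        using finite_Lim_measure_incseq[of P] Pb by auto
      then obtain N where N: "\<bar>measure M (P N) - measure M (\<Union>i. F i)\<bar> < \<epsilon> / 2"
        using e by (auto dest!: LIMSEQ_D[where r="\<epsilon>/2"])
      have PU: "P N \<subseteq> (\<Union>i. F i)" by (auto simp: P_def)
      have d1: "measure M ((\<Union>i. F i) - P N) < \<epsilon> / 2"
      proof -
        have "measure M (\<Union>i. F i) - measure M (P N) < \<epsilon> / 2" using N abs_ge_minus_self[of "measure M (P N) - measure M (\<Union>i. F i)"] by linarith
        then show ?thesis using finite_measure_Diff[OF UF Pb PU] by simp
      qed
      define \<delta> where "\<delta> = \<epsilon> / (2 * (real N + 1))"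
      have dpos: "\<delta> > 0" using e by (simp add: \<delta>_def)
      have "\<forall>i. \<exists>t. measure M (sd (F i) (ev G t)) < \<delta>" using Union.IH dpos by blast
      then obtain t where t: "\<And>i. measure M (sd (F i) (ev G (t i))) < \<delta>" by metis
      have sdb: "sd (F i) (ev G (t i)) \<in> sets M" for i using Fb evb by (auto simp: sd_def)
      have incl: "sd (\<Union>i. F i) (ev G (uns t N)) \<subseteq> ((\<Union>i. F i) - P N) \<union> (\<Union>i<N. sd (F i) (ev G (t i)))"
        by (auto simp: sd_def ev_uns P_def)
      have "measure M (sd (\<Union>i. F i) (ev G (uns t N))) \<le> measure M (((\<Union>i. F i) - P N) \<union> (\<Union>i<N. sd (F i) (ev G (t i))))"
        using incl UF Pb sdb by (intro finite_measure_mono) auto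
      also have "\<dots> \<le> measure M ((\<Union>i. F i) - P N) + measure M (\<Union>i<N. sd (F i) (ev G (t i)))"
        using UF Pb sdb by (intro measure_Un_le) auto
      also have "measure M (\<Union>i<N. sd (F i) (ev G (t i))) \<le> (\<Sum>i<N. measure M (sd (F i) (ev G (t i))))"
        using sdb by (intro measure_UNION_le) auto
      also have "\<dots> \<le> (\<Sum>i<N. \<delta>)" using t by (intro sum_mono) (simp add: less_imp_le)
      also have "\<dots> = real N * \<delta>" by simp
      also have "real N * \<delta> < \<epsilon> / 2" using e by (simp add: \<delta>_def field_simps)
      finally show "\<exists>t. measure M (sd (\<Union>i. F i) (ev G t)) < \<epsilon>"
        using d1 by (intro exI[of _ "uns t N"]) linarith
    qed
  }
qed


definition bas :: "'a::second_countable_topology set set" where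
  "bas = (SOME B. countable B \<and> topological_basis B)"

lemma bas: "countable (bas :: 'a::second_countable_topology set set)" "topological_basis (bas :: 'a set set)"
  using someI_ex[OF ex_countable_basis[where 'a='a]] unfolding bas_def by auto

definition gen :: "nat \<Rightarrow> 'a::second_countable_topology set" where
  "gen = from_nat_into (insert {} bas)"

lemma range_gen: "range gen = insert {} (bas :: 'a::second_countable_topology set set)"
  unfolding gen_def using bas(1) by (intro range_from_nat_into) auto

lemma gen_borel: "(gen n :: 'a::second_countable_topology set) \<in> sets borel"
proof -
  have "(gen n :: 'a set) \<in> range gen" by (rule rangeI)
  then have "(gen n :: 'a set) \<in> insert {} bas" by (simp only: range_gen)
  then have "(gen n :: 'a set) = {} \<or> (gen n :: 'a set) \<in> bas" by simp
  moreover have "open (gen n :: 'a set)" if "(gen n :: 'a set) \<in> bas"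
    using bas(2) that unfolding topological_basis_def by blast
  ultimately show ?thesis by auto
qed

lemma borel_sub_gen: "sets borel \<subseteq> sigma_sets UNIV (range (gen :: nat \<Rightarrow> 'a::second_countable_topology set))"
proof -
  have eq: "(borel :: 'a measure) = sigma UNIV bas" by (rule borel_eq_countable_basis[OF bas])
  have "sets (borel :: 'a measure) = sigma_sets UNIV bas" unfolding eq by (rule sets_measure_of) auto
  also have "sigma_sets UNIV bas \<subseteq> sigma_sets UNIV (range gen)" using range_gen by (intro sigma_sets_subseteq) auto
  finally show ?thesis .
qed

definition alg :: "nat \<Rightarrow> 'a::second_countable_topology set" where
  "alg n = ev gen (from_nat n)"

lemma alg_borel: "alg n \<in> sets borel"
  unfolding alg_def by (rule ev_borel[OF gen_borel])

lemma alg_approx: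
  fixes M :: "'a::second_countable_topology measure"
  assumes "finite_measure M" "sets M = sets borel" "E \<in> sets borel" "\<epsilon> > 0"
  shows "\<exists>n. measure M (sd E (alg n)) < \<epsilon>"
proof -
  have "E \<in> sigma_sets UNIV (range gen)" using borel_sub_gen assms(3) by blast
  from approx_alg[OF assms(1,2) gen_borel this] assms(4)
  obtain t where "measure M (sd E (ev gen t)) < \<epsilon>" by blast
  then show ?thesis by (intro exI[of _ "to_nat t"]) (simp add: alg_def)
qed

definition absM :: "('a::topological_space set \<Rightarrow> real) \<Rightarrow> 'a measure" where
  "absM \<mu> = measure_of UNIV (sets borel) (\<lambda>A. ennreal (pos_part \<mu> A + neg_part \<mu> A))"

lemma absM:
  assumes sm: "signed_measure \<mu>"
  shows "finite_measure (absM \<mu>)" "sets (absM \<mu>) = sets borel"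
    "A \<in> sets borel \<Longrightarrow> measure (absM \<mu>) A = pos_part \<mu> A + neg_part \<mu> A"
    "A \<in> sets borel \<Longrightarrow> \<bar>\<mu> A\<bar> \<le> measure (absM \<mu>) A"
proof -
  have s: "signed_measure (\<lambda>A. pos_part \<mu> A + neg_part \<mu> A)"
    using sm_lin[OF jordan(14,15)[OF sm], of 1 1] by simp
  have e: "emeasure (absM \<mu>) A = ennreal (pos_part \<mu> A + neg_part \<mu> A)" if "A \<in> sets borel" for A
    unfolding absM_def
  proof (rule emeasure_mof[OF s _ _ that])
    show "\<forall>A\<in>sets borel. 0 \<le> pos_part \<mu> A + neg_part \<mu> A"
      using jordan(12,13)[OF sm] by (simp add: add_nonneg_nonneg)
  qed simp
  show sb: "sets (absM \<mu>) = sets borel" by (simp add: absM_def)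
  show "finite_measure (absM \<mu>)" using e[of UNIV] by (auto simp: absM_def intro!: finite_measureI)
  show m: "measure (absM \<mu>) A = pos_part \<mu> A + neg_part \<mu> A" if "A \<in> sets borel" for A
    using e[OF that] jordan(12,13)[OF sm that] by (simp add: measure_def del: ennreal_plus)
  show "\<bar>\<mu> A\<bar> \<le> measure (absM \<mu>) A" if "A \<in> sets borel" for A
    using m[OF that] jordan(11,12,13)[OF sm that] by simp
qed

lemma pos_approx:
  fixes \<mu> :: "'a::second_countable_topology set \<Rightarrow> real"
  assumes sm: "signed_measure \<mu>" and A: "A \<in> sets borel" and e: "\<epsilon> > 0"
  shows "\<exists>n. pos_part \<mu> A - \<epsilon> < \<mu> (alg n \<inter> A)"
proof -
  obtain Y where h: "hahn_set \<mu> Y" using hahn_exists[OF sm] by blast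
  have Y: "Y \<in> sets borel" using h by (simp add: hahn_set_def)
  define E where "E = A \<inter> Y"
  have Eb: "E \<in> sets borel" using A Y by (simp add: E_def)
  have pE: "pos_part \<mu> A = \<mu> E" using pos_part_hahn[OF sm h A] by (simp add: E_def)
  interpret M: finite_measure "absM \<mu>" by (rule absM(1)[OF sm])
  have sM: "sets (absM \<mu>) = sets borel" by (rule absM(2)[OF sm])
  obtain n where n: "measure (absM \<mu>) (sd E (alg n)) < \<epsilon>"
    using alg_approx[OF absM(1,2)[OF sm] Eb e] by blast
  define C :: "'a set" where "C = alg n"
  have Cb: "C \<in> sets borel" by (simp add: C_def alg_borel)
  define X1 where "X1 = (C \<inter> A) - E"
  define X2 where "X2 = E - C"
  have X1b: "X1 \<in> sets borel" and X2b: "X2 \<in> sets borel" using Cb A Eb by (auto simp: X1_def X2_def)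
  have CA: "C \<inter> A \<in> sets borel" using Cb A by simp
  have 1: "\<mu> (C \<inter> A) = \<mu> ((C \<inter> A) \<inter> E) + \<mu> X1"
    unfolding X1_def by (rule sm_split[OF sm CA Eb])
  have 2: "\<mu> E = \<mu> (E \<inter> C) + \<mu> X2"
    unfolding X2_def by (rule sm_split[OF sm Eb Cb])
  have 3: "(C \<inter> A) \<inter> E = E \<inter> C" unfolding E_def by blast
  have a1: "\<bar>\<mu> X1\<bar> \<le> measure (absM \<mu>) X1" using absM(4)[OF sm X1b] .
  have a2: "\<bar>\<mu> X2\<bar> \<le> measure (absM \<mu>) X2" using absM(4)[OF sm X2b] .
  have X1M: "X1 \<in> sets (absM \<mu>)" and X2M: "X2 \<in> sets (absM \<mu>)" using X1b X2b sM by simp_all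
  have dj: "X1 \<inter> X2 = {}" unfolding X1_def X2_def by blast
  have sdM: "sd E C \<in> sets (absM \<mu>)" using Eb Cb sM unfolding sd_def by simp
  have sub: "X1 \<union> X2 \<subseteq> sd E C" unfolding X1_def X2_def sd_def by blast
  have "measure (absM \<mu>) X1 + measure (absM \<mu>) X2 = measure (absM \<mu>) (X1 \<union> X2)"
    by (rule M.finite_measure_Union[OF X1M X2M dj, symmetric])
  also have "\<dots> \<le> measure (absM \<mu>) (sd E C)"
    by (rule M.finite_measure_mono[OF sub sdM])
  finally have lt: "measure (absM \<mu>) X1 + measure (absM \<mu>) X2 < \<epsilon>" using n by (simp add: C_def)
  have 4: "\<mu> (C \<inter> A) = \<mu> (E \<inter> C) + \<mu> X1" using 1 3 by simp
  have "pos_part \<mu> A - \<epsilon> < \<mu> (C \<inter> A)"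
    using 4 2 pE abs_le_D2[OF a1] abs_le_D1[OF a2] lt by linarith
  then show ?thesis unfolding C_def by blast
qed


primrec hs :: "('a::second_countable_topology set \<Rightarrow> real) \<Rightarrow> 'a set \<Rightarrow> nat \<Rightarrow> real" where
  "hs m A 0 = 0"
| "hs m A (Suc n) = max (hs m A n) (m (alg n \<inter> A))"

lemma le_pos_part:
  assumes sm: "signed_measure m" and B: "B \<in> sets borel" "B \<subseteq> A"
  shows "m B \<le> pos_part m A"
  unfolding pos_part_def
  by (rule cSUP_upper) (use B sm_bdd[OF sm, of "{B \<in> sets borel. B \<subseteq> A}"] in auto)

lemma pos_part_nonneg:
  assumes sm: "signed_measure m"
  shows "0 \<le> pos_part m A"
  using le_pos_part[OF sm, of "{}" A] sm_empty[OF sm] by simp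

lemma hs_props:
  fixes m :: "'a::second_countable_topology set \<Rightarrow> real"
  assumes sm: "signed_measure m" and A: "A \<in> sets borel"
  shows "hs m A n \<le> pos_part m A" "0 \<le> hs m A n" "incseq (hs m A)"
    "(\<lambda>n. hs m A n) \<longlonglongrightarrow> pos_part m A"
proof -
  show le: "hs m A n \<le> pos_part m A" for n
  proof (induction n)
    case 0 then show ?case using pos_part_nonneg[OF sm] by simp
  next
    case (Suc n)
    have "m (alg n \<inter> A) \<le> pos_part m A" using alg_borel A by (intro le_pos_part[OF sm]) auto
    then show ?case using Suc by simp
  qed
  show inc: "incseq (hs m A)" by (rule incseq_SucI) simp
  show "0 \<le> hs m A n" for n using incseq_SucD inc by (metis hs.simps(1) incseq_def le0)
  show "(\<lambda>n. hs m A n) \<longlonglongrightarrow> pos_part m A"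
  proof (rule LIMSEQ_I)
    fix r :: real assume r: "0 < r"
    obtain n0 where n0: "pos_part m A - r < m (alg n0 \<inter> A)" using pos_approx[OF sm A r] by blast
    have "norm (hs m A n - pos_part m A) < r" if "Suc n0 \<le> n" for n
    proof -
      have a: "m (alg n0 \<inter> A) \<le> hs m A (Suc n0)" by simp
      have b: "hs m A (Suc n0) \<le> hs m A n" using inc that unfolding incseq_def by blast
      show ?thesis using a b n0 le[of n] by simp
    qed
    then show "\<exists>no. \<forall>n\<ge>no. norm (hs m A n - pos_part m A) < r" by blast
  qed
qed

lemma wc_kernel:
  assumes "weakly_continuous_with_kernel T k"
  shows "\<And>x. signed_measure (k x)" "\<And>A. A \<in> sets borel \<Longrightarrow> (\<lambda>x. k x A) \<in> borel_measurable borel"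
    "\<exists>C. \<forall>x. tv_norm (k x) \<le> C"
    "\<And>\<mu> A. signed_measure \<mu> \<Longrightarrow> A \<in> sets borel \<Longrightarrow> T \<mu> A = sintegral \<mu> (\<lambda>x. k x A)"
  using assms unfolding weakly_continuous_with_kernel_def bounded_transition_kernel_def transition_kernel_def
  by auto

lemma kp_meas:
  fixes k :: "'a::second_countable_topology \<Rightarrow> 'a set \<Rightarrow> real"
  assumes sm: "\<And>x. signed_measure (k x)" and km: "\<And>A. A \<in> sets borel \<Longrightarrow> (\<lambda>x. k x A) \<in> borel_measurable borel"
    and A: "A \<in> sets borel"
  shows "(\<lambda>x. pos_part (k x) A) \<in> borel_measurable borel"
proof (rule borel_measurable_LIMSEQ_real)
  show "(\<lambda>n. hs (k x) A n) \<longlonglongrightarrow> pos_part (k x) A" for x using hs_props(4)[OF sm A] .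
  show "(\<lambda>x. hs (k x) A n) \<in> borel_measurable borel" for n
  proof (induction n)
    case 0 then show ?case by simp
  next
    case (Suc n)
    have "(\<lambda>x. k x (alg n \<inter> A)) \<in> borel_measurable borel" using alg_borel A by (intro km) auto
    then show ?case using Suc by simp
  qed
qed

lemma tv_props:
  assumes sm: "signed_measure m"
  shows "A \<in> sets borel \<Longrightarrow> \<bar>m A\<bar> \<le> tv_norm m"
    "A \<in> sets borel \<Longrightarrow> pos_part m A \<le> tv_norm m"
    "0 \<le> tv_norm m"
    "tv_norm m = measure (pos_meas m) UNIV + measure (neg_meas m) UNIV"
proof -
  interpret P: finite_measure "pos_meas m" by (rule jordan(1)[OF sm])
  interpret N: finite_measure "neg_meas m" by (rule jordan(2)[OF sm])
  show tv: "tv_norm m = measure (pos_meas m) UNIV + measure (neg_meas m) UNIV"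
    using jordan(7,8)[OF sm, of UNIV] by (simp add: tv_norm_def)
  have mono: "measure (pos_meas m) A \<le> measure (pos_meas m) UNIV" "measure (neg_meas m) A \<le> measure (neg_meas m) UNIV"
    for A using P.finite_measure_mono[of A UNIV] N.finite_measure_mono[of A UNIV] jordan(3,4)[OF sm] by auto
  show "\<bar>m A\<bar> \<le> tv_norm m" if "A \<in> sets borel"
    using jordan(7,8,11,12,13)[OF sm that] mono[of A] tv by (simp add: abs_le_iff)
  show "pos_part m A \<le> tv_norm m" if "A \<in> sets borel"
    using jordan(7,8,12,13)[OF sm that] jordan(13)[OF sm, of UNIV] mono[of A] tv by simp
  show "0 \<le> tv_norm m" using jordan(12,13)[OF sm, of UNIV] by (simp add: tv_norm_def)
qed


lemma pos_meas_restrict: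
  assumes sm: "signed_measure \<nu>" and pos: "\<forall>A\<in>sets borel. 0 \<le> \<nu> A" and E: "E \<in> sets borel"
  shows "pos_meas (\<lambda>B. \<nu> (B \<inter> E)) = density (pos_meas \<nu>) (\<lambda>x. ennreal (indicator E x))"
proof (rule measure_eqI)
  have sm1: "signed_measure (\<lambda>B. \<nu> (B \<inter> E))" using sm_restrict(1)[OF sm E] .
  have pos1: "\<forall>A\<in>sets borel. 0 \<le> \<nu> (A \<inter> E)" using pos E by auto
  show "sets (pos_meas (\<lambda>B. \<nu> (B \<inter> E))) = sets (density (pos_meas \<nu>) (\<lambda>x. ennreal (indicator E x)))"
    using jordan(3)[OF sm1] jordan(3)[OF sm] by simp
  fix B assume "B \<in> sets (pos_meas (\<lambda>B. \<nu> (B \<inter> E)))"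
  then have B: "B \<in> sets borel" using jordan(3)[OF sm1] by simp
  have "emeasure (pos_meas (\<lambda>B. \<nu> (B \<inter> E))) B = ennreal (\<nu> (B \<inter> E))"
    using jordan(9)[OF sm1 B] pos_part_pos(1)[OF sm1 pos1 B] by simp
  moreover have "emeasure (density (pos_meas \<nu>) (\<lambda>x. ennreal (indicator E x))) B = ennreal (\<nu> (B \<inter> E))"
  proof -
    have mE: "(\<lambda>x. ennreal (indicator E x)) \<in> borel_measurable (pos_meas \<nu>)"
      using E jordan(3)[OF sm] by (simp add: measurable_cong_sets[OF jordan(3)[OF sm] refl])
    have Bs: "B \<in> sets (pos_meas \<nu>)" using B jordan(3)[OF sm] by simp
    have "emeasure (density (pos_meas \<nu>) (\<lambda>x. ennreal (indicator E x))) B =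
        (\<integral>\<^sup>+ x. ennreal (indicator E x) * indicator B x \<partial>pos_meas \<nu>)"
      by (rule emeasure_density[OF mE Bs])
    also have "\<dots> = (\<integral>\<^sup>+ x. indicator (B \<inter> E) x \<partial>pos_meas \<nu>)"
      by (intro nn_integral_cong) (simp split: split_indicator)
    also have "\<dots> = emeasure (pos_meas \<nu>) (B \<inter> E)"
      using B E jordan(3)[OF sm] by (intro nn_integral_indicator) simp
    also have "\<dots> = ennreal (\<nu> (B \<inter> E))"
      using jordan(9)[OF sm, of "B \<inter> E"] pos_part_pos(1)[OF sm pos, of "B \<inter> E"] B E by simp
    finally show ?thesis .
  qed
  ultimately show "emeasure (pos_meas (\<lambda>B. \<nu> (B \<inter> E))) B = emeasure (density (pos_meas \<nu>) (\<lambda>x. ennreal (indicator E x))) B"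
    by simp
qed

lemma int_restrict:
  fixes f :: "'a::topological_space \<Rightarrow> real"
  assumes sm: "signed_measure \<nu>" and pos: "\<forall>A\<in>sets borel. 0 \<le> \<nu> A" and E: "E \<in> sets borel"
    and f: "f \<in> borel_measurable borel"
  shows "integral\<^sup>L (pos_meas (\<lambda>B. \<nu> (B \<inter> E))) f = integral\<^sup>L (pos_meas \<nu>) (\<lambda>x. indicator E x * f x)"
proof -
  have mc: "borel_measurable (pos_meas \<nu>) = borel_measurable borel"
    by (rule measurable_cong_sets[OF jordan(3)[OF sm] refl])
  have "integral\<^sup>L (density (pos_meas \<nu>) (\<lambda>x. ennreal (indicator E x))) f = integral\<^sup>L (pos_meas \<nu>) (\<lambda>x. indicator E x *\<^sub>R f x)"
    by (rule integral_density) (use f E in \<open>auto simp: mc\<close>)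
  then show ?thesis unfolding pos_meas_restrict[OF sm pos E] by simp
qed


locale kern =
  fixes k :: "'a::polish_space \<Rightarrow> 'a set \<Rightarrow> real" and C :: real
  assumes smk: "\<And>x. signed_measure (k x)"
    and km: "\<And>A. A \<in> sets borel \<Longrightarrow> (\<lambda>x. k x A) \<in> borel_measurable borel"
    and Cb: "\<And>x. tv_norm (k x) \<le> C"
begin

lemma C0: "0 \<le> C" using tv_props(3)[OF smk] Cb order_trans by blast

lemma kpm: "A \<in> sets borel \<Longrightarrow> (\<lambda>x. pos_part (k x) A) \<in> borel_measurable borel"
  by (rule kp_meas[OF smk km])

lemma kpb: "A \<in> sets borel \<Longrightarrow> \<bar>pos_part (k x) A\<bar> \<le> C"
  using pos_part_nonneg[OF smk] tv_props(2)[OF smk, of A x] Cb[of x] by simp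

lemma kpnn: "0 \<le> pos_part (k x) A"
  using pos_part_nonneg[OF smk] by simp

lemma kb: "A \<in> sets borel \<Longrightarrow> \<bar>k x A\<bar> \<le> C"
  using tv_props(1)[OF smk, of A x] Cb[of x] by simp

lemma kle: "A \<in> sets borel \<Longrightarrow> k x A \<le> pos_part (k x) A"
  using le_pos_part[OF smk, of A A] by simp

lemma kps: "signed_measure (pos_part (k x))"
  using jordan(14)[OF smk] by simp

lemma kp_empty: "pos_part (k x) {} = 0"
  using sm_empty[OF kps] by simp

lemma Hm: "A \<in> sets borel \<Longrightarrow> (\<lambda>x. hs (k x) A n) \<in> borel_measurable borel"
proof (induction n)
  case 0 then show ?case by simp
next
  case (Suc n)
  have "(\<lambda>x. k x (alg n \<inter> A)) \<in> borel_measurable borel" using alg_borel Suc.prems by (intro km) auto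
  then show ?case using Suc by simp
qed

lemma Hb: "A \<in> sets borel \<Longrightarrow> \<bar>hs (k x) A n\<bar> \<le> C"
  using hs_props(1,2)[OF smk, of A x n] kpb[of A x] by simp

lemma intI:
  assumes "finite_measure M" "sets M = sets borel" and A: "A \<in> sets borel"
  shows "integrable M (\<lambda>x. pos_part (k x) A)"
  using kpb[OF A] by (intro fm_int[OF assms(1,2) kpm[OF A], where K=C]) auto

lemma int_fin:
  assumes "finite_measure M" "sets M = sets borel" and A: "A \<in> sets borel"
  shows "integral\<^sup>L M (\<lambda>x. pos_part (k x) A) \<le> C * measure M UNIV"
    "0 \<le> integral\<^sup>L M (\<lambda>x. pos_part (k x) A)"
proof -
  have sp: "space M = UNIV" by (rule space_borelM[OF assms(2)])
  have "integral\<^sup>L M (\<lambda>x. pos_part (k x) A) \<le> integral\<^sup>L M (\<lambda>x. C)"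
    using kpb[OF A] C0
    by (intro integral_mono fm_int[OF assms(1,2) kpm[OF A]] fm_int[OF assms(1,2), where K=C]) (auto simp: abs_le_iff)
  then show "integral\<^sup>L M (\<lambda>x. pos_part (k x) A) \<le> C * measure M UNIV" using sp by (simp add: mult.commute)
  show "0 \<le> integral\<^sup>L M (\<lambda>x. pos_part (k x) A)" using kpnn by simp
qed

lemma int_sums:
  assumes M: "finite_measure M" "sets M = sets borel"
    and F: "range F \<subseteq> sets borel" "disjoint_family F"
  shows "(\<lambda>n. integral\<^sup>L M (\<lambda>x. pos_part (k x) (F n))) sums integral\<^sup>L M (\<lambda>x. pos_part (k x) (\<Union>n. F n))"
proof -
  have Fb: "F i \<in> sets borel" for i using F(1) by auto
  have UFb: "(\<Union>n. F n) \<in> sets borel" using Fb by auto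
  have mc: "borel_measurable M = borel_measurable borel"
    by (rule measurable_cong_sets[OF M(2) refl])
  have partial: "(\<Sum>i<n. pos_part (k x) (F i)) = pos_part (k x) (\<Union>i<n. F i)" for n x
    using sm_finite_union[OF kps F(1,2)] by simp
  have pb: "\<bar>\<Sum>i<n. pos_part (k x) (F i)\<bar> \<le> C" for n x
    unfolding partial using Fb by (intro kpb) auto
  have "(\<lambda>n. integral\<^sup>L M (\<lambda>x. \<Sum>i<n. pos_part (k x) (F i))) \<longlonglongrightarrow> integral\<^sup>L M (\<lambda>x. pos_part (k x) (\<Union>n. F n))"
  proof (rule integral_dominated_convergence[where w="\<lambda>x. C"])
    show "(\<lambda>x. pos_part (k x) (\<Union>n. F n)) \<in> borel_measurable M" using kpm[OF UFb] mc by blast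
    show "(\<lambda>x. \<Sum>i<n. pos_part (k x) (F i)) \<in> borel_measurable M" for n
    proof -
      have "(\<lambda>x. \<Sum>i<n. pos_part (k x) (F i)) \<in> borel_measurable borel"
        by (intro borel_measurable_sum kpm Fb)
      then show ?thesis using mc by blast
    qed
    show "integrable M (\<lambda>x. C)" using M(1) by (simp add: finite_measure.integrable_const)
    show "AE x in M. (\<lambda>n. \<Sum>i<n. pos_part (k x) (F i)) \<longlonglongrightarrow> pos_part (k x) (\<Union>n. F n)"
      using sm_sums[OF kps F] by (simp add: sums_def)
    show "AE x in M. norm (\<Sum>i<n. pos_part (k x) (F i)) \<le> C" for n using pb by simp
  qed
  moreover have "integral\<^sup>L M (\<lambda>x. \<Sum>i<n. pos_part (k x) (F i)) = (\<Sum>i<n. integral\<^sup>L M (\<lambda>x. pos_part (k x) (F i)))" for n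
    by (rule Bochner_Integration.integral_sum) (rule intI[OF M Fb])
  ultimately show ?thesis unfolding sums_def by simp
qed

end


context kern begin

lemma P_sm:
  assumes sm: "signed_measure \<mu>"
  shows "signed_measure (\<lambda>A. sintegral \<mu> (\<lambda>x. pos_part (k x) A))"
  unfolding signed_measure_def
proof (intro conjI allI impI)
  have "(\<lambda>x. pos_part (k x) {}) = (\<lambda>x. 0)" by (simp add: kp_empty)
  then show "sintegral \<mu> (\<lambda>x. pos_part (k x) {}) = 0" by (simp add: sintegral_def)
  fix F :: "nat \<Rightarrow> 'a set" assume F: "range F \<subseteq> sets borel" "disjoint_family F"
  show "(\<lambda>n. sintegral \<mu> (\<lambda>x. pos_part (k x) (F n))) sums sintegral \<mu> (\<lambda>x. pos_part (k x) (\<Union>n. F n))"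
    unfolding sintegral_def
    by (intro sums_diff int_sums[OF jordan(1,3)[OF sm] F] int_sums[OF jordan(2,4)[OF sm] F])
qed

lemma P_bnd:
  assumes sm: "signed_measure \<mu>"
  shows "tv_norm (\<lambda>A. sintegral \<mu> (\<lambda>x. pos_part (k x) A)) \<le> C * tv_norm \<mu>"
proof -
  define Q where "Q = (\<lambda>A. sintegral \<mu> (\<lambda>x. pos_part (k x) A))"
  note Mp = jordan(1,3)[OF sm] and Mn = jordan(2,4)[OF sm]
  have ne: "{B \<in> sets borel. B \<subseteq> UNIV} \<noteq> {}" by auto
  have p: "pos_part Q UNIV \<le> C * measure (pos_meas \<mu>) UNIV"
    unfolding pos_part_def
  proof (rule cSUP_least[OF ne])
    fix B :: "'a set" assume "B \<in> {B \<in> sets borel. B \<subseteq> UNIV}"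
    then have B: "B \<in> sets borel" by simp
    show "Q B \<le> C * measure (pos_meas \<mu>) UNIV"
      using int_fin[OF Mp B] int_fin[OF Mn B] by (simp add: Q_def sintegral_def)
  qed
  have n: "neg_part Q UNIV \<le> C * measure (neg_meas \<mu>) UNIV"
    unfolding neg_part_def pos_part_def
  proof (rule cSUP_least[OF ne])
    fix B :: "'a set" assume "B \<in> {B \<in> sets borel. B \<subseteq> UNIV}"
    then have B: "B \<in> sets borel" by simp
    show "- Q B \<le> C * measure (neg_meas \<mu>) UNIV"
      using int_fin[OF Mp B] int_fin[OF Mn B] by (simp add: Q_def sintegral_def)
  qed
  have "tv_norm Q \<le> C * measure (pos_meas \<mu>) UNIV + C * measure (neg_meas \<mu>) UNIV"
    using p n by (simp add: tv_norm_def)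
  also have "\<dots> = C * tv_norm \<mu>" using tv_props(4)[OF sm] by (simp add: distrib_left)
  finally show ?thesis by (simp add: Q_def)
qed

lemma P_bounded: "bounded_meas_op (\<lambda>\<mu> A. sintegral \<mu> (\<lambda>x. pos_part (k x) A))"
  unfolding bounded_meas_op_def
proof (intro conjI)
  show "\<forall>\<mu>. signed_measure \<mu> \<longrightarrow> signed_measure (\<lambda>A. sintegral \<mu> (\<lambda>x. pos_part (k x) A))"
    using P_sm by blast
  show "\<forall>\<mu> \<nu> a b. signed_measure \<mu> \<longrightarrow> signed_measure \<nu> \<longrightarrow>
     (\<forall>A\<in>sets borel. sintegral (\<lambda>B. a * \<mu> B + b * \<nu> B) (\<lambda>x. pos_part (k x) A) =
        a * sintegral \<mu> (\<lambda>x. pos_part (k x) A) + b * sintegral \<nu> (\<lambda>x. pos_part (k x) A))"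
  proof (intro allI impI ballI)
    fix \<mu> \<nu> :: "'a set \<Rightarrow> real" and a b :: real and A :: "'a set"
    assume sm: "signed_measure \<mu>" "signed_measure \<nu>" and A: "A \<in> sets borel"
    show "sintegral (\<lambda>B. a * \<mu> B + b * \<nu> B) (\<lambda>x. pos_part (k x) A) =
        a * sintegral \<mu> (\<lambda>x. pos_part (k x) A) + b * sintegral \<nu> (\<lambda>x. pos_part (k x) A)"
      by (rule sint_lin[OF sm kpm[OF A] kpb[OF A]])
  qed
  show "\<exists>C'. \<forall>\<mu>. signed_measure \<mu> \<longrightarrow> tv_norm (\<lambda>A. sintegral \<mu> (\<lambda>x. pos_part (k x) A)) \<le> C' * tv_norm \<mu>"
    using P_bnd by blast
qed

lemma kp_kernel: "bounded_transition_kernel (\<lambda>x. pos_part (k x))"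
  unfolding bounded_transition_kernel_def transition_kernel_def
proof (intro conjI allI ballI)
  show "signed_measure (pos_part (k x))" for x by (rule kps)
  show "(\<lambda>x. pos_part (k x) A) \<in> borel_measurable borel" if "A \<in> sets borel" for A by (rule kpm[OF that])
  show "\<exists>C. \<forall>x. tv_norm (pos_part (k x)) \<le> C"
  proof (intro exI allI)
    fix x
    have pos: "\<forall>A\<in>sets borel. 0 \<le> pos_part (k x) A" using kpnn by simp
    have "tv_norm (pos_part (k x)) = pos_part (k x) UNIV"
      using pos_part_pos[OF kps pos, of UNIV] by (simp add: tv_norm_def)
    also have "\<dots> \<le> C" using tv_props(2)[OF smk, of UNIV x] Cb[of x] by simp
    finally show "tv_norm (pos_part (k x)) \<le> C" .
  qed
qed

end


locale kernT = kern k C for k :: "'a::polish_space \<Rightarrow> 'a set \<Rightarrow> real" and C +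
  fixes T :: "'a meas_op"
  assumes Tf: "\<And>\<mu> A. signed_measure \<mu> \<Longrightarrow> A \<in> sets borel \<Longrightarrow> T \<mu> A = sintegral \<mu> (\<lambda>x. k x A)"
begin

lemma Tpos:
  assumes "signed_measure \<nu>" "\<forall>A\<in>sets borel. 0 \<le> \<nu> A" "A \<in> sets borel"
  shows "T \<nu> A = integral\<^sup>L (pos_meas \<nu>) (\<lambda>x. k x A)"
  using Tf[OF assms(1,3)] sint_pos[OF assms(1,2) km[OF assms(3)] kb[OF assms(3)]] by simp

lemma Ppos:
  assumes "signed_measure \<nu>" "\<forall>A\<in>sets borel. 0 \<le> \<nu> A" "A \<in> sets borel"
  shows "sintegral \<nu> (\<lambda>x. pos_part (k x) A) = integral\<^sup>L (pos_meas \<nu>) (\<lambda>x. pos_part (k x) A)"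
  using sint_pos[OF assms(1,2) kpm[OF assms(3)] kpb[OF assms(3)]] by simp

lemma opT: "op_le T (\<lambda>\<mu> A. sintegral \<mu> (\<lambda>x. pos_part (k x) A))"
  unfolding op_le_def
proof (intro allI impI ballI)
  fix \<nu> :: "'a set \<Rightarrow> real" and A :: "'a set" assume sm: "signed_measure \<nu>" and pos: "\<forall>A\<in>sets borel. 0 \<le> \<nu> A"
    and A: "A \<in> sets borel"
  note M = jordan(1,3)[OF sm]
  have "integral\<^sup>L (pos_meas \<nu>) (\<lambda>x. k x A) \<le> integral\<^sup>L (pos_meas \<nu>) (\<lambda>x. pos_part (k x) A)"
  proof (rule integral_mono)
    show "integrable (pos_meas \<nu>) (\<lambda>x. k x A)" using kb[OF A] by (intro fm_int[OF M km[OF A], where K=C]) auto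
    show "integrable (pos_meas \<nu>) (\<lambda>x. pos_part (k x) A)" by (rule intI[OF M A])
    show "k x A \<le> pos_part (k x) A" for x by (rule kle[OF A])
  qed
  then show "T \<nu> A \<le> sintegral \<nu> (\<lambda>x. pos_part (k x) A)"
    using Tpos[OF sm pos A] Ppos[OF sm pos A] by simp
qed

lemma op0: "op_le zero_op (\<lambda>\<mu> A. sintegral \<mu> (\<lambda>x. pos_part (k x) A))"
  unfolding op_le_def zero_op_def
proof (intro allI impI ballI)
  fix \<nu> :: "'a set \<Rightarrow> real" and A :: "'a set" assume sm: "signed_measure \<nu>" and pos: "\<forall>A\<in>sets borel. 0 \<le> \<nu> A"
    and A: "A \<in> sets borel"
  show "0 \<le> sintegral \<nu> (\<lambda>x. pos_part (k x) A)"
    using Ppos[OF sm pos A] int_fin(2)[OF jordan(1,3)[OF sm] A] by simp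
qed

lemma minimal:
  assumes bS: "bounded_meas_op S" and TS: "op_le T S" and ZS: "op_le zero_op S"
  shows "op_le (\<lambda>\<mu> A. sintegral \<mu> (\<lambda>x. pos_part (k x) A)) S"
proof -
  have S_sm: "\<And>\<mu>. signed_measure \<mu> \<Longrightarrow> signed_measure (S \<mu>)"
    using bS unfolding bounded_meas_op_def by blast
  have S_lin: "\<And>\<mu> \<nu> a b A. signed_measure \<mu> \<Longrightarrow> signed_measure \<nu> \<Longrightarrow> A \<in> sets borel \<Longrightarrow>
      S (\<lambda>B. a * \<mu> B + b * \<nu> B) A = a * S \<mu> A + b * S \<nu> A"
    using bS unfolding bounded_meas_op_def by blast
  obtain Cs where Cs: "\<And>\<mu>. signed_measure \<mu> \<Longrightarrow> tv_norm (S \<mu>) \<le> Cs * tv_norm \<mu>"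
    using bS unfolding bounded_meas_op_def by blast
  have S_eq: "S \<mu> A = S \<mu>' A"
    if sm: "signed_measure \<mu>" "signed_measure \<mu>'" and eq: "\<forall>B\<in>sets borel. \<mu> B = \<mu>' B"
      and A: "A \<in> sets borel" for \<mu> \<mu>' :: "'a set \<Rightarrow> real" and A
  proof -
    define \<nu> where "\<nu> = (\<lambda>B. 1 * \<mu> B + (-1) * \<mu>' B)"
    have sm\<nu>: "signed_measure \<nu>" unfolding \<nu>_def by (rule sm_lin[OF sm])
    have z: "\<nu> B = 0" if "B \<in> sets borel" for B using eq that by (simp add: \<nu>_def)
    have i1: "\<nu> ` {B \<in> sets borel. B \<subseteq> UNIV} = {0}"
    proof
      show "\<nu> ` {B \<in> sets borel. B \<subseteq> UNIV} \<subseteq> {0}" using z by auto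
      have "\<nu> {} \<in> \<nu> ` {B \<in> sets borel. B \<subseteq> UNIV}" by auto
      then show "{0} \<subseteq> \<nu> ` {B \<in> sets borel. B \<subseteq> UNIV}" using z[of "{}"] by simp
    qed
    have i2: "(\<lambda>B. - \<nu> B) ` {B \<in> sets borel. B \<subseteq> UNIV} = {0}"
    proof
      show "(\<lambda>B. - \<nu> B) ` {B \<in> sets borel. B \<subseteq> UNIV} \<subseteq> {0}" using z by auto
      have "(\<lambda>B. - \<nu> B) {} \<in> (\<lambda>B. - \<nu> B) ` {B \<in> sets borel. B \<subseteq> UNIV}" by blast
      then show "{0} \<subseteq> (\<lambda>B. - \<nu> B) ` {B \<in> sets borel. B \<subseteq> UNIV}" using z[of "{}"] by simp
    qed
    have tv0: "tv_norm \<nu> = 0" unfolding tv_norm_def neg_part_def pos_part_def using i1 i2 by simp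
    have "tv_norm (S \<nu>) \<le> 0" using Cs[OF sm\<nu>] tv0 by simp
    then have "S \<nu> A = 0" using tv_props(1)[OF S_sm[OF sm\<nu>] A] by simp
    moreover have "S \<nu> A = 1 * S \<mu> A + (-1) * S \<mu>' A" unfolding \<nu>_def by (rule S_lin[OF sm A])
    ultimately show ?thesis by simp
  qed
  have S_pos: "0 \<le> S \<mu> A" if "signed_measure \<mu>" "\<forall>B\<in>sets borel. 0 \<le> \<mu> B" "A \<in> sets borel" for \<mu> A
    using ZS that unfolding op_le_def zero_op_def by blast
  have S_mono: "S \<mu> D \<le> S \<mu> A"
    if sm: "signed_measure \<mu>" and pos: "\<forall>B\<in>sets borel. 0 \<le> \<mu> B" and D: "D \<in> sets borel"
      and A: "A \<in> sets borel" and DA: "D \<subseteq> A" for \<mu> D A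
  proof -
    have "S \<mu> A = S \<mu> (A \<inter> D) + S \<mu> (A - D)" by (rule sm_split[OF S_sm[OF sm] A D])
    moreover have "A \<inter> D = D" using DA by auto
    moreover have "0 \<le> S \<mu> (A - D)" using S_pos[OF sm pos] A D by auto
    ultimately show ?thesis by simp
  qed
  show ?thesis
    unfolding op_le_def
  proof (intro allI impI ballI)
    fix \<nu> :: "'a set \<Rightarrow> real" and A :: "'a set"
    assume sm: "signed_measure \<nu>" and pos: "\<forall>A\<in>sets borel. 0 \<le> \<nu> A" and A: "A \<in> sets borel"
    define H where "H n x = hs (k x) A n" for n x
    have Hm': "H n \<in> borel_measurable borel" for n unfolding H_def by (rule Hm[OF A])
    have Hb': "\<bar>H n x\<bar> \<le> C" for n x unfolding H_def by (rule Hb[OF A])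
    have claim: "\<forall>\<nu>. signed_measure \<nu> \<longrightarrow> (\<forall>B\<in>sets borel. 0 \<le> \<nu> B) \<longrightarrow>
        integral\<^sup>L (pos_meas \<nu>) (H n) \<le> S \<nu> A" for n
    proof (induction n)
      case 0
      have "H 0 = (\<lambda>x. 0)" by (simp add: H_def fun_eq_iff)
      then show ?case using S_pos A by simp
    next
      case (Suc n)
      show ?case
      proof (intro allI impI)
        fix \<nu> :: "'a set \<Rightarrow> real"
        assume sm: "signed_measure \<nu>" and pos: "\<forall>B\<in>sets borel. 0 \<le> \<nu> B"
        note M = jordan(1,3)[OF sm]
        have mc: "borel_measurable (pos_meas \<nu>) = borel_measurable borel"
          by (rule measurable_cong_sets[OF jordan(3)[OF sm] refl])
        define D where "D = alg n \<inter> A"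
        have Db: "D \<in> sets borel" unfolding D_def by (intro sets.Int alg_borel A)
        have DA: "D \<subseteq> A" by (simp add: D_def)
        define E where "E = {x. H n x < k x D}"
        have Eb: "E \<in> sets borel"
          using borel_measurable_less[OF Hm'[of n] km[OF Db]] by (simp add: E_def)
        have Ecb: "- E \<in> sets borel" using Eb by (simp add: borel_comp)
        have sm1: "signed_measure (\<lambda>B. \<nu> (B \<inter> E))" by (rule sm_restrict(1)[OF sm Eb])
        have sm2: "signed_measure (\<lambda>B. \<nu> (B \<inter> - E))" by (rule sm_restrict(1)[OF sm Ecb])
        have pos1: "\<forall>B\<in>sets borel. 0 \<le> \<nu> (B \<inter> E)" using pos Eb by auto
        have pos2: "\<forall>B\<in>sets borel. 0 \<le> \<nu> (B \<inter> - E)" using pos Ecb by auto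
        have Hs: "H (Suc n) = (\<lambda>x. indicator E x * k x D + indicator (- E) x * H n x)"
          by (auto simp: fun_eq_iff H_def E_def D_def indicator_def max_def)
        have m1: "(\<lambda>x. indicator E x * k x D) \<in> borel_measurable borel"
          using Eb km[OF Db] by (intro borel_measurable_times) auto
        have m2: "(\<lambda>x. indicator (- E) x * H n x) \<in> borel_measurable borel"
          using Ecb Hm'[of n] by (intro borel_measurable_times) auto
        have b1: "\<forall>x. \<bar>indicator E x * k x D\<bar> \<le> C" using kb[OF Db] C0 by (simp add: indicator_def)
        have b2: "\<forall>x. \<bar>indicator (- E) x * H n x\<bar> \<le> C" using Hb' C0 by (simp add: indicator_def)
        have "integral\<^sup>L (pos_meas \<nu>) (H (Suc n)) =
            integral\<^sup>L (pos_meas \<nu>) (\<lambda>x. indicator E x * k x D) + integral\<^sup>L (pos_meas \<nu>) (\<lambda>x. indicator (- E) x * H n x)"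
          unfolding Hs by (rule Bochner_Integration.integral_add[OF fm_int[OF M m1 b1] fm_int[OF M m2 b2]])
        also have "integral\<^sup>L (pos_meas \<nu>) (\<lambda>x. indicator E x * k x D) = integral\<^sup>L (pos_meas (\<lambda>B. \<nu> (B \<inter> E))) (\<lambda>x. k x D)"
          by (rule int_restrict[OF sm pos Eb km[OF Db], symmetric])
        also have "\<dots> = T (\<lambda>B. \<nu> (B \<inter> E)) D" by (rule Tpos[OF sm1 pos1 Db, symmetric])
        also have "integral\<^sup>L (pos_meas \<nu>) (\<lambda>x. indicator (- E) x * H n x) = integral\<^sup>L (pos_meas (\<lambda>B. \<nu> (B \<inter> - E))) (H n)"
          by (rule int_restrict[OF sm pos Ecb Hm', symmetric])
        finally have eq1: "integral\<^sup>L (pos_meas \<nu>) (H (Suc n)) =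
            T (\<lambda>B. \<nu> (B \<inter> E)) D + integral\<^sup>L (pos_meas (\<lambda>B. \<nu> (B \<inter> - E))) (H n)" .
        have le1: "T (\<lambda>B. \<nu> (B \<inter> E)) D \<le> S (\<lambda>B. \<nu> (B \<inter> E)) D"
          using TS sm1 pos1 Db unfolding op_le_def by blast
        have le2: "S (\<lambda>B. \<nu> (B \<inter> E)) D \<le> S (\<lambda>B. \<nu> (B \<inter> E)) A"
          by (rule S_mono[OF sm1 pos1 Db A DA])
        have le3: "integral\<^sup>L (pos_meas (\<lambda>B. \<nu> (B \<inter> - E))) (H n) \<le> S (\<lambda>B. \<nu> (B \<inter> - E)) A"
          using Suc.IH sm2 pos2 by blast
        have sm12: "signed_measure (\<lambda>B. 1 * \<nu> (B \<inter> E) + 1 * \<nu> (B \<inter> - E))" by (rule sm_lin[OF sm1 sm2])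
        have eqB: "\<forall>B\<in>sets borel. \<nu> B = 1 * \<nu> (B \<inter> E) + 1 * \<nu> (B \<inter> - E)"
        proof
          fix B :: "'a set" assume B: "B \<in> sets borel"
          have "B - E = B \<inter> - E" by auto
          then show "\<nu> B = 1 * \<nu> (B \<inter> E) + 1 * \<nu> (B \<inter> - E)" using sm_split[OF sm B Eb] by simp
        qed
        have "S \<nu> A = S (\<lambda>B. 1 * \<nu> (B \<inter> E) + 1 * \<nu> (B \<inter> - E)) A" by (rule S_eq[OF sm sm12 eqB A])
        also have "\<dots> = 1 * S (\<lambda>B. \<nu> (B \<inter> E)) A + 1 * S (\<lambda>B. \<nu> (B \<inter> - E)) A" by (rule S_lin[OF sm1 sm2 A])
        finally have eq2: "S \<nu> A = S (\<lambda>B. \<nu> (B \<inter> E)) A + S (\<lambda>B. \<nu> (B \<inter> - E)) A" by simp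
        show "integral\<^sup>L (pos_meas \<nu>) (H (Suc n)) \<le> S \<nu> A"
          using eq1 eq2 le1 le2 le3 by linarith
      qed
    qed
    note M = jordan(1,3)[OF sm]
    have mc: "borel_measurable (pos_meas \<nu>) = borel_measurable borel"
      by (rule measurable_cong_sets[OF jordan(3)[OF sm] refl])
    have "(\<lambda>n. integral\<^sup>L (pos_meas \<nu>) (H n)) \<longlonglongrightarrow> integral\<^sup>L (pos_meas \<nu>) (\<lambda>x. pos_part (k x) A)"
    proof (rule integral_dominated_convergence[where w="\<lambda>x. C"])
      show "(\<lambda>x. pos_part (k x) A) \<in> borel_measurable (pos_meas \<nu>)" using kpm[OF A] mc by blast
      show "H n \<in> borel_measurable (pos_meas \<nu>)" for n using Hm' mc by blast
      show "integrable (pos_meas \<nu>) (\<lambda>x. C)" using M(1) by (simp add: finite_measure.integrable_const)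
      show "AE x in pos_meas \<nu>. (\<lambda>n. H n x) \<longlonglongrightarrow> pos_part (k x) A"
        using hs_props(4)[OF smk A] by (simp add: H_def)
      show "AE x in pos_meas \<nu>. norm (H n x) \<le> C" for n using Hb' by simp
    qed
    then have "integral\<^sup>L (pos_meas \<nu>) (\<lambda>x. pos_part (k x) A) \<le> S \<nu> A"
      using claim sm pos by (intro LIMSEQ_le_const2) auto
    then show "sintegral \<nu> (\<lambda>x. pos_part (k x) A) \<le> S \<nu> A" using Ppos[OF sm pos A] by simp
  qed
qed

end


theorem theorem3p3:
  fixes T :: "('a::polish_space) meas_op"
    and k :: "'a \<Rightarrow> 'a set \<Rightarrow> real"
  assumes "weakly_continuous_with_kernel T k"
  shows "is_pos_part_op T (\<lambda>\<mu> A. sintegral \<mu> (\<lambda>x. pos_part (k x) A))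
       \<and> weakly_continuous_with_kernel (\<lambda>\<mu> A. sintegral \<mu> (\<lambda>x. pos_part (k x) A))
            (\<lambda>x. pos_part (k x))"
proof -
  note wc = wc_kernel[OF assms]
  obtain C where C: "\<And>x. tv_norm (k x) \<le> C" using wc(3) by blast
  interpret kernT k C T
    by unfold_locales (use wc C in auto)
  have "is_pos_part_op T (\<lambda>\<mu> A. sintegral \<mu> (\<lambda>x. pos_part (k x) A))"
    unfolding is_pos_part_op_def using P_bounded opT op0 minimal by blast
  moreover have "weakly_continuous_with_kernel (\<lambda>\<mu> A. sintegral \<mu> (\<lambda>x. pos_part (k x) A)) (\<lambda>x. pos_part (k x))"
    unfolding weakly_continuous_with_kernel_def using kp_kernel by simp
  ultimately show ?thesis by blast
qed


end
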